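(* Let $d_1\ge\cdots\ge d_n\ge1$ be integers, $\xi$ as in the context, and suppose that $d_h=\Omega(\sqrt{M_1})$ and $d_{h+1}=O(\sqrt{M_1})$ for some $1\le h\le n-1$. Put $H_k=\sum_{i\le h}[d_i]_k$ and $L_k=M_k-H_k$. Then (a) $\xi=O\left(\frac{H_1H_2^2+M_2M_3}{M_1^3}+\frac{L_2M_2M_3}{M_1^4}+\frac{L_2L_3H_4}{M_1^5}\right)$; (b) if moreover $L_2=\Omega(M_1)$, then $\xi=O\left(\frac{H_1H_2^2}{M_1^3}+\frac{L_2M_2M_3}{M_1^4}+\frac{L_2L_3H_4}{M_1^5}\right)$.
   Context: For an integer $k\ge1$, $[x]_k=x(x-1)\cdots(x-k+1)$ and $M_k=\sum_{i=1}^n[d_i]_k$. Define $U_1=\sum_{v}(d_v-2)\min\{[d_v]_2/M_1,1\}$; $U_2=\sum_{u<v}\min\{[d_u]_2[d_v]_2/M_1^2,d_ud_v/M_1\}$; $U_3=\sum_{i\ne j}\sum_{w}\min\{[d_i]_2[d_j]_2/M_1^2,d_id_j/M_1\}\min\{[d_i-2]_2[d_w]_2/M_1^2,1\}(d_w-2)$; $U_4=\sum_{i\ne j}\min\{[d_i]_3[d_j]_2/M_1^2,[d_i]_2d_j/M_1\}$; $U_5=\sum_{i\ne j}\sum_{w}\min\{d_i[d_j]_2/M_1^2,d_j/M_1\}\min\{[d_i-2]_2[d_w]_2/M_1^2,(d_i-2)d_w/M_1\}$; $\xi=U_5+\frac{U_1+U_2^2+U_3}{M_1}+\frac{U_4M_2}{M_1^2}+\frac{U_2M_2^2}{M_1^3}+\frac{M_2}{M_1^2}+\frac{M_3M_2}{M_1^3}+\frac{M_2^3}{M_1^4}$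 (vertex indices range over $\{1,\ldots,n\}$). The $O$ constants in the conclusion depend only on the implied constants in the hypotheses. *)

theory Defs
  imports Complex_Main
begin

text \<open>Falling factorial [x]_k = x(x-1)...(x-k+1), over the reals (arguments may be negative,
  e.g. [d_i - 2]_2 with d_i = 1).\<close>
definition ff :: "real \<Rightarrow> nat \<Rightarrow> real" where
  "ff x k = (\<Prod>j<k. x - real j)"

text \<open>Degree sequence d indexed by vertices 1..n.\<close>
definition Mk :: "nat \<Rightarrow> nat \<Rightarrow> (nat \<Rightarrow> nat) \<Rightarrow> real" where
  "Mk k n d = (\<Sum>i\<in>{1..n}. ff (real (d i)) k)"

definition U1 :: "nat \<Rightarrow> (nat \<Rightarrow> nat) \<Rightarrow> real" where
  "U1 n d = (let M1 = Mk 1 n d in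
     \<Sum>v\<in>{1..n}. (real (d v) - 2) * min (ff (d v) 2 / M1) 1)"

definition U2 :: "nat \<Rightarrow> (nat \<Rightarrow> nat) \<Rightarrow> real" where
  "U2 n d = (let M1 = Mk 1 n d in
     \<Sum>(u,v)\<in>{(u,v). u \<in> {1..n} \<and> v \<in> {1..n} \<and> u < v}.
        min (ff (d u) 2 * ff (d v) 2 / M1^2) (real (d u) * real (d v) / M1))"

definition U3 :: "nat \<Rightarrow> (nat \<Rightarrow> nat) \<Rightarrow> real" where
  "U3 n d = (let M1 = Mk 1 n d in
     \<Sum>(i,j)\<in>{(i,j). i \<in> {1..n} \<and> j \<in> {1..n} \<and> i \<noteq> j}. \<Sum>w\<in>{1..n}.
        min (ff (d i) 2 * ff (d j) 2 / M1^2) (real (d i) * real (d j) / M1)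
        * min (ff (real (d i) - 2) 2 * ff (d w) 2 / M1^2) 1 * (real (d w) - 2))"

definition U4 :: "nat \<Rightarrow> (nat \<Rightarrow> nat) \<Rightarrow> real" where
  "U4 n d = (let M1 = Mk 1 n d in
     \<Sum>(i,j)\<in>{(i,j). i \<in> {1..n} \<and> j \<in> {1..n} \<and> i \<noteq> j}.
        min (ff (d i) 3 * ff (d j) 2 / M1^2) (ff (d i) 2 * real (d j) / M1))"

definition U5 :: "nat \<Rightarrow> (nat \<Rightarrow> nat) \<Rightarrow> real" where
  "U5 n d = (let M1 = Mk 1 n d in
     \<Sum>(i,j)\<in>{(i,j). i \<in> {1..n} \<and> j \<in> {1..n} \<and> i \<noteq> j}. \<Sum>w\<in>{1..n}.
        min (real (d i) * ff (d j) 2 / M1^2) (real (d j) / M1)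
        * min (ff (real (d i) - 2) 2 * ff (d w) 2 / M1^2) ((real (d i) - 2) * real (d w) / M1))"

definition xi :: "nat \<Rightarrow> (nat \<Rightarrow> nat) \<Rightarrow> real" where
  "xi n d = (let M1 = Mk 1 n d; M2 = Mk 2 n d; M3 = Mk 3 n d in
     U5 n d + (U1 n d + (U2 n d)^2 + U3 n d) / M1 + U4 n d * M2 / M1^2
     + U2 n d * M2^2 / M1^3 + M2 / M1^2 + M3 * M2 / M1^3 + M2^3 / M1^4)"

definition Hk :: "nat \<Rightarrow> nat \<Rightarrow> (nat \<Rightarrow> nat) \<Rightarrow> real" where
  "Hk k h d = (\<Sum>i\<in>{1..h}. ff (real (d i)) k)"

definition Lk :: "nat \<Rightarrow> nat \<Rightarrow> nat \<Rightarrow> (nat \<Rightarrow> nat) \<Rightarrow> real" where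
  "Lk k h n d = Mk k n d - Hk k h d"

definition admissible :: "real \<Rightarrow> real \<Rightarrow> nat \<Rightarrow> nat \<Rightarrow> (nat \<Rightarrow> nat) \<Rightarrow> bool" where
  "admissible c1 c2 n h d \<longleftrightarrow>
     (\<forall>i\<in>{1..n}. d i \<ge> 1) \<and> (\<forall>i j. 1 \<le> i \<longrightarrow> i \<le> j \<longrightarrow> j \<le> n \<longrightarrow> d j \<le> d i) \<and>
     1 \<le> h \<and> h \<le> n - 1 \<and>
     real (d h) \<ge> c1 * sqrt (Mk 1 n d) \<and> real (d (h+1)) \<le> c2 * sqrt (Mk 1 n d)"

end

theory Submission
  imports Defs
begin

lemma aux_half: "(l::real) \<le> K*x \<Longrightarrow> 2*h \<le> x \<Longrightarrow> h + l \<le> (1/2 + K)*x"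
  by (simp add: distrib_right)

lemma big_derived:
  fixes m s a b h1 h2 h3 l2 l3 :: real
  assumes m: "m > 0" and s: "s > 0" "s^2 = m" and a: "a > 0" and b: "b > 0" and as4: "a*s \<ge> 4"
    and h1: "h1 \<ge> a*s" "h1 \<le> m" and h2: "h2 \<ge> 3/4*a*s*h1" and h3: "h3 \<ge> a/2*s*h2"
    and l2: "l2 \<ge> 0" "l2 \<le> b*s*m" and l3: "l3 \<ge> 0"
  shows "m \<le> 4/(3*a^2) * h2"
    and "m*h1 \<le> 8/(3*a^2) * (h3+l3)"
    and "h1^2*m \<le> 16/(9*a^2) * h2^2"
    and "h1^3 \<le> 16/(9*a^2) * h2^2"
    and "h2+l2 \<le> (1/2 + 8*b/(3*a^3)) * (h3+l3)"
    and "m \<le> 2/(3*a^2) * (h3+l3)"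
    and "s*h1 \<le> 4/(3*a) * h2"
proof -
  have h1p: "h1 > 0" using h1 a s by (smt (verit) mult_pos_pos)
  have h2a: "h2 \<ge> 3/4*a^2*m"
  proof -
    have "3/4*a*s*h1 \<ge> 3/4*a*s*(a*s)" using h1 a s by (intro mult_left_mono) auto
    also have "3/4*a*s*(a*s) = 3/4*a^2*m" using s by (simp add: power2_eq_square algebra_simps)
    finally show ?thesis using h2 by linarith
  qed
  show 1: "m \<le> 4/(3*a^2) * h2" using h2a a by (simp add: field_simps)
  have "3/4*a^2*m \<ge> 0" using m by simp
  hence h2p: "h2 \<ge> 0" using h2a by linarith
  have h3b: "h3 \<ge> 3/8*a^2*m*h1"
  proof -
    have "a/2*s*h2 \<ge> a/2*s*(3/4*a*s*h1)" using h2 a s by (intro mult_left_mono) auto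
    also have "a/2*s*(3/4*a*s*h1) = 3/8*a^2*m*h1" using s by (simp add: power2_eq_square algebra_simps)
    finally show ?thesis using h3 by linarith
  qed
  show "m*h1 \<le> 8/(3*a^2) * (h3+l3)" using h3b l3 a by (simp add: field_simps)
  have "h2^2 \<ge> (3/4*a*s*h1)^2" using h2 a s h1p by (intro power_mono) auto
  also have "(3/4*a*s*h1)^2 = 9/16*a^2*m*h1^2" using s by (simp add: power2_eq_square algebra_simps)
  finally have hh: "h2^2 \<ge> 9/16*a^2*m*h1^2" .
  show k9: "h1^2*m \<le> 16/(9*a^2) * h2^2" using hh a by (simp add: field_simps)
  have "h1^3 \<le> h1^2*m" using h1 h1p by (simp add: power3_eq_cube power2_eq_square)
  thus "h1^3 \<le> 16/(9*a^2) * h2^2" using k9 by linarith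
  show "s*h1 \<le> 4/(3*a) * h2" using h2 a by (simp add: field_simps)
  have m3b: "h3 + l3 \<ge> 2*h2"
  proof -
    have "(a*s)*h2 \<ge> 4*h2" using as4 h2p by (intro mult_right_mono) auto
    hence "a/2*s*h2 \<ge> 2*h2" by simp
    thus ?thesis using h3 l3 by linarith
  qed
  show "m \<le> 2/(3*a^2) * (h3+l3)" using m3b h2a a by (simp add: field_simps)
  have "b*s*m \<le> b*s*(4/(3*a^2) * h2)" using 1 b s by (intro mult_left_mono) auto
  hence "l2 \<le> b*s*(4/(3*a^2) * h2)" using l2 by linarith
  also have "... = (8*b/(3*a^3)) * (a/2*s*h2)" using a by (simp add: field_simps power3_eq_cube power2_eq_square)
  also have "... \<le> (8*b/(3*a^3)) * (h3+l3)" using h3 l3 a b by (intro mult_left_mono) auto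
  finally have "l2 \<le> (8*b/(3*a^3)) * (h3+l3)" .
  then show "h2+l2 \<le> (1/2 + 8*b/(3*a^3)) * (h3+l3)" using m3b by (rule aux_half)
qed

definition Ebound :: "real \<Rightarrow> real \<Rightarrow> real \<Rightarrow> real \<Rightarrow> real \<Rightarrow> real \<Rightarrow> real \<Rightarrow> real \<Rightarrow> real" where
 "Ebound m h1 h2 h3 h4 l2 l3 l4 = (let m2 = h2+l2; m3 = h3+l3; m4 = h4+l4;
   U2b = h1^2/m + 2*m2*l2/m^2 in
   m2*(m2*h1/m + m3*l2/m^2)/m^2
   + (m3/m + U2b^2 + (U2b*h1 + l3*(m3*h1/m + m4*l2/m^2)/m^2))/m
   + (m3*l2/m^2 + m2*h1/m)*m2/m^2 + U2b*m2^2/m^3 + m2/m^2 + m3*m2/m^3 + m2^3/m^4)"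

lemma Ebound_num:
  assumes m: "m > 0"
  shows "Ebound m h1 h2 h3 h4 l2 l3 l4 =
   ((h2+l2)^2*h1*m^2 + (h2+l2)*(h3+l3)*l2*m
   + (h3+l3)*m^3 + (h1^2*m + 2*(h2+l2)*l2)^2 + ((h1^2*m + 2*(h2+l2)*l2)*h1*m^2 + l3*((h3+l3)*h1*m + (h4+l4)*l2))
   + ((h3+l3)*l2*m + (h2+l2)*h1*m^2)*(h2+l2) + (h1^2*m + 2*(h2+l2)*l2)*(h2+l2)^2
   + (h2+l2)*m^3 + (h3+l3)*(h2+l2)*m^2 + (h2+l2)^3*m) / m^5"
  using m unfolding Ebound_def Let_def
  by (simp add: field_simps power2_eq_square power3_eq_cube eval_nat_numeral)

lemma sq_le2: "((x::real)+y)^2 \<le> 2*x^2 + 2*y^2"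
proof -
  have "((x::real)+y)^2 = 2*x^2+2*y^2 - (x-y)^2" by (simp add: eval_nat_numeral algebra_simps)
  moreover have "0 \<le> (x-y)^2" by simp
  ultimately show ?thesis by linarith
qed

lemma big_num:
  fixes m s a b h1 h2 h3 h4 l2 l3 l4 m2 m3 m4 K6 K7 K8 K9 Km2 :: real
  assumes m: "m > 0" and s: "s > 0" and a: "a > 0" and b: "b > 0"
    and h1: "h1 > 0" "h1 \<le> m" and h2: "h2 \<ge> 0" and h3: "h3 \<ge> 0" and h4: "h4 \<ge> 0"
    and l2: "l2 \<ge> 0" and l3: "l3 \<ge> 0" "l3 \<le> b*s*l2" and l4: "l4 \<ge> 0" "l4 \<le> b^2*m*l2"
    and m2: "m2 = h2+l2" and m3: "m3 = h3+l3" and m4: "m4 = h4+l4"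
    and CS: "m2^2 \<le> m*(m3+m2)"
    and FKm2: "m \<le> Km2*h2" and FK8: "m*h1 \<le> K8*m3" and FK9': "h1^2*m \<le> K9*h2^2"
    and FK9: "h1^3 \<le> K9*h2^2" and FK6: "m2 \<le> K6*m3" and FK7: "m \<le> K7*m3"
    and Fsh: "s*h1 \<le> (4/(3*a))*h2"
    and K: "K6 \<ge> 0" "K7 \<ge> 0" "K8 \<ge> 0" "K9 \<ge> 0" "Km2 \<ge> 0"
  shows "m2^2*h1*m^2 + m2*m3*l2*m + m3*m^3 + (h1^2*m + 2*m2*l2)^2
        + ((h1^2*m + 2*m2*l2)*h1*m^2 + l3*(m3*h1*m + m4*l2))
        + (m3*l2*m + m2*h1*m^2)*m2 + (h1^2*m + 2*m2*l2)*m2^2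
        + m2*m^3 + m3*m2*m^2 + m2^3*m
     \<le> (6 + 2*K9 + K9)*(h1*h2^2*m^2) + (Km2 + K7 + 2 + K6)*(m2*m3*m^2)
        + (2 + 8*K8 + 10*(1+K6) + 4*b/(3*a) + b^2)*(l2*m2*m3*m) + l2*l3*h4"
proof -
  define R1 where "R1 = h1*h2^2*m^2"
  define R2 where "R2 = m2*m3*m^2"
  define R3 where "R3 = l2*m2*m3*m"
  define R4 where "R4 = l2*l3*h4"
  define Qn where "Qn = m2^2*h1*m^2"
  have m2p: "m2 \<ge> 0" and m3p: "m3 \<ge> 0" and l2m2: "l2 \<le> m2" and h2m2: "h2 \<le> m2" and l3m3: "l3 \<le> m3"
    using m2 m3 h2 l2 h3 l3 by auto
  have CS': "m2^2 \<le> m*((1+K6)*m3)"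
  proof -
    have "m3+m2 \<le> (1+K6)*m3" using FK6 by (simp add: algebra_simps)
    hence "m*(m3+m2) \<le> m*((1+K6)*m3)" using m by (intro mult_left_mono) auto
    thus ?thesis using CS by linarith
  qed
  have Q: "Qn \<le> 2*R1 + 2*K8*R3"
  proof -
    have "Qn \<le> (2*h2^2 + 2*l2^2)*(h1*m^2)" unfolding Qn_def m2
      using sq_le2[of h2 l2] h1 m by (simp add: mult.assoc mult_right_mono)
    also have "... = 2*R1 + 2*((m*h1)*(l2*l2*m))" unfolding R1_def by (simp add: eval_nat_numeral algebra_simps)
    also have "(m*h1)*(l2*l2*m) \<le> (K8*m3)*(l2*m2*m)"
    proof (rule mult_mono[OF FK8])
      show "l2*l2*m \<le> l2*m2*m" using l2m2 l2 m by (intro mult_right_mono mult_left_mono) auto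
    qed (use K m3p l2 m in auto)
    also have "(K8*m3)*(l2*m2*m) = K8*R3" unfolding R3_def by (simp add: algebra_simps)
    finally show ?thesis by linarith
  qed
  have N3: "m3*m^3 \<le> Km2*R2"
  proof -
    have "m3*m^3 = (m3*m^2)*m" by (simp add: eval_nat_numeral algebra_simps)
    also have "... \<le> (m3*m^2)*(Km2*m2)" using FKm2 h2m2 K m3p
      by (intro mult_left_mono) (auto intro: order_trans mult_left_mono)
    also have "... = Km2*R2" unfolding R2_def by (simp add: algebra_simps)
    finally show ?thesis .
  qed
  have N4: "(h1^2*m + 2*m2*l2)^2 \<le> 2*K9*R1 + 8*(1+K6)*R3"
  proof -
    have "(h1^2*m + 2*m2*l2)^2 \<le> 2*(h1^2*m)^2 + 2*(2*m2*l2)^2" by (rule sq_le2)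
    also have "(h1^2*m)^2 = h1^3*(h1*m^2)" by (simp add: eval_nat_numeral algebra_simps)
    also have "... \<le> (K9*h2^2)*(h1*m^2)" using FK9 h1 m by (intro mult_right_mono) auto
    also have "(2*m2*l2)^2 = 4*(m2^2*(l2*l2))" by (simp add: eval_nat_numeral algebra_simps)
    also have "m2^2*(l2*l2) \<le> (m*((1+K6)*m3))*(l2*m2)"
      using CS' l2 l2m2 m m3p K by (intro mult_mono mult_left_mono) auto
    finally show ?thesis unfolding R1_def R3_def by (simp add: algebra_simps)
  qed
  have N5: "(h1^2*m + 2*m2*l2)*h1*m^2 + l3*(m3*h1*m + m4*l2)
       \<le> K9*R1 + 2*K8*R3 + 4*b/(3*a)*R3 + R4 + b^2*R3"
  proof -
    have e: "(h1^2*m + 2*m2*l2)*h1*m^2 + l3*(m3*h1*m + m4*l2)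
      = (h1*m^2)*(h1^2*m) + 2*((m2*l2*m)*(m*h1)) + (l3*(m3*m))*h1 + R4 + l3*l4*l2"
      unfolding R4_def m4 by (simp add: eval_nat_numeral algebra_simps)
    have t1: "(h1*m^2)*(h1^2*m) \<le> (h1*m^2)*(K9*h2^2)" using FK9' h1 m by (intro mult_left_mono) auto
    have t2: "(m2*l2*m)*(m*h1) \<le> (m2*l2*m)*(K8*m3)" using FK8 m2p l2 m by (intro mult_left_mono) auto
    have t3: "(l3*(m3*m))*h1 \<le> 4*b/(3*a)*R3"
    proof -
      have "(l3*(m3*m))*h1 \<le> (b*s*l2*(m3*m))*h1" using l3 m3p m h1
        by (intro mult_right_mono) auto
      also have "... = (b*l2*m3*m)*(s*h1)" by (simp add: algebra_simps)
      also have "... \<le> (b*l2*m3*m)*((4/(3*a))*h2)" using Fsh b l2 m3p m by (intro mult_left_mono) auto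
      also have "... \<le> (b*l2*m3*m)*((4/(3*a))*m2)" using h2m2 a b l2 m3p m
        by (intro mult_left_mono) auto
      also have "... = 4*b/(3*a)*R3" unfolding R3_def by (simp add: algebra_simps)
      finally show ?thesis .
    qed
    have t4: "l3*l4*l2 \<le> b^2*R3"
    proof -
      have "l3*l4*l2 \<le> l3*(b^2*m*l2)*l2" using l4 l3 l2 by (intro mult_right_mono mult_left_mono) auto
      also have "... = b^2*m*(l3*(l2*l2))" by (simp add: algebra_simps)
      also have "l3*(l2*l2) \<le> m3*(l2*m2)" using l3m3 l3 l2 l2m2 by (intro mult_mono mult_left_mono) auto
      hence "b^2*m*(l3*(l2*l2)) \<le> b^2*m*(m3*(l2*m2))" using m by (intro mult_left_mono) auto
      also have "b^2*m*(m3*(l2*m2)) = b^2*R3" unfolding R3_def by (simp add: algebra_simps)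
      finally show ?thesis by linarith
    qed
    have "(h1*m^2)*(K9*h2^2) = K9*R1" unfolding R1_def by (simp add: algebra_simps)
    moreover have "(m2*l2*m)*(K8*m3) = K8*R3" unfolding R3_def by (simp add: algebra_simps)
    ultimately show ?thesis using e t1 t2 t3 t4 by linarith
  qed
  have N6: "(m3*l2*m + m2*h1*m^2)*m2 = R3 + Qn" unfolding R3_def Qn_def by (simp add: eval_nat_numeral algebra_simps)
  have N7: "(h1^2*m + 2*m2*l2)*m2^2 \<le> Qn + 2*(1+K6)*R3"
  proof -
    have "h1^2*m*m2^2 = (h1*m2^2*m)*h1" by (simp add: eval_nat_numeral algebra_simps)
    also have "... \<le> (h1*m2^2*m)*m" using h1 m m2p by (intro mult_left_mono) auto
    also have "... = Qn" unfolding Qn_def by (simp add: eval_nat_numeral algebra_simps)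
    finally have "h1^2*m*m2^2 \<le> Qn" .
    moreover have "m2^2*(m2*l2) \<le> (m*((1+K6)*m3))*(m2*l2)" using CS' m2p l2 by (intro mult_right_mono) auto
    moreover have "(m*((1+K6)*m3))*(m2*l2) = (1+K6)*R3" unfolding R3_def by (simp add: algebra_simps)
    moreover have "(h1^2*m + 2*m2*l2)*m2^2 = h1^2*m*m2^2 + 2*(m2^2*(m2*l2))" by (simp add: eval_nat_numeral algebra_simps)
    ultimately show ?thesis by linarith
  qed
  have N8: "m2*m^3 \<le> K7*R2"
  proof -
    have "m2*m^3 = (m2*m^2)*m" by (simp add: eval_nat_numeral algebra_simps)
    also have "... \<le> (m2*m^2)*(K7*m3)" using FK7 m2p m by (intro mult_left_mono) auto
    also have "... = K7*R2" unfolding R2_def by (simp add: algebra_simps)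
    finally show ?thesis .
  qed
  have N9: "m3*m2*m^2 = R2" unfolding R2_def by (simp add: algebra_simps)
  have N10: "m2^3*m \<le> (1+K6)*R2"
  proof -
    have "m2^3*m = m2^2*(m2*m)" by (simp add: eval_nat_numeral algebra_simps)
    also have "... \<le> (m*((1+K6)*m3))*(m2*m)" using CS' m2p m by (intro mult_right_mono) auto
    also have "... = (1+K6)*R2" unfolding R2_def by (simp add: eval_nat_numeral algebra_simps)
    finally show ?thesis .
  qed
  have N2: "m2*m3*l2*m = R3" unfolding R3_def by (simp add: algebra_simps)
  have fin: "Qn + R3 + Km2*R2 + (2*K9*R1 + 8*(1+K6)*R3) + (K9*R1 + 2*K8*R3 + 4*b/(3*a)*R3 + R4 + b^2*R3)
      + (R3 + Qn) + (Qn + 2*(1+K6)*R3) + K7*R2 + R2 + (1+K6)*R2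
     \<le> (6 + 2*K9 + K9)*R1 + (Km2 + K7 + 2 + K6)*R2
        + (2 + 8*K8 + 10*(1+K6) + 4*b/(3*a) + b^2)*R3 + R4"
    using Q by (simp add: algebra_simps)
  show ?thesis
    using Q N3 N4 N5 N6 N7 N8 N9 N10 N2 fin unfolding R1_def[symmetric] R2_def[symmetric] R3_def[symmetric]
      R4_def[symmetric] Qn_def[symmetric] by linarith
qed

definition Kbig :: "real \<Rightarrow> real \<Rightarrow> real" where
  "Kbig a b = (6 + 3*(16/(9*a^2))) + (4/(3*a^2) + 2/(3*a^2) + 2 + (1/2 + 8*b/(3*a^3)))
     + (2 + 8*(8/(3*a^2)) + 10*(1+(1/2 + 8*b/(3*a^3))) + 4*b/(3*a) + b^2) + 1"

lemma big_case:
  fixes m s a b h1 h2 h3 h4 l2 l3 l4 :: real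
  assumes m: "m > 0" and s: "s > 0" "s^2 = m" and a: "a > 0" and b: "b > 0" and as4: "a*s \<ge> 4"
    and h1: "h1 \<ge> a*s" "h1 \<le> m" and h2: "h2 \<ge> 3/4*a*s*h1" and h3: "h3 \<ge> a/2*s*h2" and h4: "h4 \<ge> 0"
    and l2: "l2 \<ge> 0" "l2 \<le> b*s*m" and l3: "l3 \<ge> 0" "l3 \<le> b*s*l2" and l4: "l4 \<ge> 0" "l4 \<le> b^2*m*l2"
    and CS: "(h2+l2)^2 \<le> m*((h3+l3)+(h2+l2))"
  shows "Ebound m h1 h2 h3 h4 l2 l3 l4 \<le> Kbig a b * ((h1*h2^2 + (h2+l2)*(h3+l3))/m^3
            + l2*(h2+l2)*(h3+l3)/m^4 + l2*l3*h4/m^5)"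
proof -
  define K6 where "K6 = 1/2 + 8*b/(3*a^3)"
  define K7 where "K7 = 2/(3*a^2)"
  define K8 where "K8 = 8/(3*a^2)"
  define K9 where "K9 = 16/(9*a^2)"
  define Km2 where "Km2 = 4/(3*a^2)"
  note D = big_derived[OF m s a b as4 h1 h2 h3 l2 l3(1)]
  have "a*s > 0" using a s by simp
  hence h1p: "h1 > 0" using h1 by linarith
  have "0 < 4/(3*a^2)*h2" using D(1) m by linarith
  hence h2p: "h2 \<ge> 0" using a by (simp add: zero_less_mult_iff zero_less_divide_iff)
  have "a/2*s*h2 \<ge> 0" using a s h2p by simp
  hence h3p: "h3 \<ge> 0" using h3 by linarith
  have Kp: "K6 \<ge> 0" "K7 \<ge> 0" "K8 \<ge> 0" "K9 \<ge> 0" "Km2 \<ge> 0"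
    unfolding K6_def K7_def K8_def K9_def Km2_def using a b by auto
  have N: "(h2+l2)^2*h1*m^2 + (h2+l2)*(h3+l3)*l2*m + (h3+l3)*m^3 + (h1^2*m + 2*(h2+l2)*l2)^2
        + ((h1^2*m + 2*(h2+l2)*l2)*h1*m^2 + l3*((h3+l3)*h1*m + (h4+l4)*l2))
        + ((h3+l3)*l2*m + (h2+l2)*h1*m^2)*(h2+l2) + (h1^2*m + 2*(h2+l2)*l2)*(h2+l2)^2
        + (h2+l2)*m^3 + (h3+l3)*(h2+l2)*m^2 + (h2+l2)^3*m
     \<le> (6 + 2*K9 + K9)*(h1*h2^2*m^2) + (Km2 + K7 + 2 + K6)*((h2+l2)*(h3+l3)*m^2)
        + (2 + 8*K8 + 10*(1+K6) + 4*b/(3*a) + b^2)*(l2*(h2+l2)*(h3+l3)*m) + l2*l3*h4"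
    apply (rule big_num[of m s a b h1 h2 h3 h4 l2 l3 l4 "h2+l2" "h3+l3" "h4+l4" Km2 K8 K9 K6 K7])
    using m s a b h1p h1(2) h2p h3p h4 l2(1) l3 l4 CS D Kp unfolding K6_def K7_def K8_def K9_def Km2_def by auto
  define A1 where "A1 = 6 + 2*K9 + K9"
  define A2 where "A2 = Km2 + K7 + 2 + K6"
  define A3 where "A3 = 2 + 8*K8 + 10*(1+K6) + 4*b/(3*a) + b^2"
  have Ap: "A1 \<ge> 0" "A2 \<ge> 0" "A3 \<ge> 0" unfolding A1_def A2_def A3_def using Kp a b by auto
  have KA: "Kbig a b = A1 + A2 + A3 + 1"
    unfolding Kbig_def A1_def A2_def A3_def K6_def K7_def K8_def K9_def Km2_def by simp
  define R1 where "R1 = h1*h2^2/m^3"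
  define R2 where "R2 = (h2+l2)*(h3+l3)/m^3"
  define R3 where "R3 = l2*(h2+l2)*(h3+l3)/m^4"
  define R4 where "R4 = l2*l3*h4/m^5"
  have Rp: "R1 \<ge> 0" "R2 \<ge> 0" "R3 \<ge> 0" "R4 \<ge> 0" unfolding R1_def R2_def R3_def R4_def
    using h1p h2p h3p h4 l2 l3 m by auto
  have "Ebound m h1 h2 h3 h4 l2 l3 l4 \<le> ((6 + 2*K9 + K9)*(h1*h2^2*m^2) + (Km2 + K7 + 2 + K6)*((h2+l2)*(h3+l3)*m^2)
        + (2 + 8*K8 + 10*(1+K6) + 4*b/(3*a) + b^2)*(l2*(h2+l2)*(h3+l3)*m) + l2*l3*h4)/m^5"
    unfolding Ebound_num[OF m] using N m by (intro divide_right_mono) auto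
  also have "... = A1*R1 + A2*R2 + A3*R3 + R4"
    unfolding A1_def[symmetric] A2_def[symmetric] A3_def[symmetric] R1_def R2_def R3_def R4_def
    using m by (simp add: field_simps eval_nat_numeral)
  also have "... \<le> (A1 + A2 + A3 + 1)*(R1+R2+R3+R4)"
    using Ap Rp by (simp add: algebra_simps add_mono mult_nonneg_nonneg)
  finally show ?thesis unfolding KA R1_def R2_def R3_def R4_def by (simp add: add_divide_distrib)
qed

lemma aux30: "0 \<le> p6 \<Longrightarrow> (p3::real) \<le> p6 \<Longrightarrow> p4 \<le> p6 \<Longrightarrow> p5 \<le> p6 \<Longrightarrow> 2*p6 + 9*p5 + 13*p4 + p3 \<le> 30*p6"
  by linarith

definition Ksmall :: "real \<Rightarrow> real" where
  "Ksmall N = 30*(2*N^4)^6/4"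

lemma small_case:
  fixes m N h1 h2 h3 h4 l2 l3 l4 :: real
  assumes m: "1 \<le> m" "m \<le> N" and h1: "1 \<le> h1" "h1 \<le> m" and h2: "2 \<le> h2" "h2 \<le> m^2"
    and h3: "0 \<le> h3" "h3 \<le> m^3" and h4: "0 \<le> h4" "h4 \<le> m^4"
    and l2: "0 \<le> l2" "l2 \<le> m^2" and l3: "0 \<le> l3" "l3 \<le> m^3" and l4: "0 \<le> l4" "l4 \<le> m^4"
  shows "Ebound m h1 h2 h3 h4 l2 l3 l4 \<le> Ksmall N * (h1*h2^2/m^3)"
proof -
  define V where "V = 2*N^4"
  have N1: "1 \<le> N" using m by linarith
  have mpow: "m^k \<le> N^4" if "k \<le> 4" for k
  proof -
    have "m^k \<le> m^4" using m that by (intro power_increasing) auto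
    also have "... \<le> N^4" using m by (intro power_mono) auto
    finally show ?thesis .
  qed
  have "1 \<le> N^4" using N1 by (simp add: one_le_power)
  hence V1: "1 \<le> V" and N4V: "N^4 \<le> V" unfolding V_def by linarith+
  have mp: "m \<le> N^4" "m^2 \<le> N^4" "m^3 \<le> N^4" "m^4 \<le> N^4"
    using mpow[of 1] mpow[of 2] mpow[of 3] mpow[of 4] by simp_all
  have b1: "m \<le> V" "h1 \<le> V" "h2 \<le> V" "h3 \<le> V" "h4 \<le> V" "l2 \<le> V" "l3 \<le> V" "l4 \<le> V"
    using mp m h1 h2 h3 h4 l2 l3 l4 N4V
    apply - apply (linarith)+ done
  have b2: "h2+l2 \<le> V" "h3+l3 \<le> V" "h4+l4 \<le> V"
    using mp h2 h3 h4 l2 l3 l4 unfolding V_def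
    apply - apply (linarith)+ done
  have p: "0 \<le> m" "0 \<le> h1" "0 \<le> h2" "0 \<le> h2+l2" "0 \<le> h3+l3" "0 \<le> h4+l4"
    using m h1 h2 h3 h4 l2 l3 l4 by auto
  note B = b1 b2 p h3(1) h4(1) l2(1) l3(1) l4(1) V1
  have t1: "(h2+l2)^2*h1*m^2 \<le> V^2*V*V^2" using B by (intro mult_mono power_mono) auto
  have t2: "(h2+l2)*(h3+l3)*l2*m \<le> V*V*V*V" using B by (intro mult_mono) auto
  have t3: "(h3+l3)*m^3 \<le> V*V^3" using B by (intro mult_mono power_mono) auto
  have q: "h1^2*m + 2*(h2+l2)*l2 \<le> V^2*V + 2*V*V" using B by (intro add_mono mult_mono power_mono) auto
  have qp: "0 \<le> h1^2*m + 2*(h2+l2)*l2" using B by auto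
  have t4: "(h1^2*m + 2*(h2+l2)*l2)^2 \<le> (V^2*V + 2*V*V)^2" using q qp by (intro power_mono) auto
  have t5: "(h1^2*m + 2*(h2+l2)*l2)*h1*m^2 + l3*((h3+l3)*h1*m + (h4+l4)*l2)
      \<le> (V^2*V + 2*V*V)*V*V^2 + V*(V*V*V + V*V)" using B q qp
    by (intro add_mono mult_mono power_mono) auto
  have t6: "((h3+l3)*l2*m + (h2+l2)*h1*m^2)*(h2+l2) \<le> (V*V*V + V*V*V^2)*V"
    using B by (intro add_mono mult_mono power_mono) auto
  have t7: "(h1^2*m + 2*(h2+l2)*l2)*(h2+l2)^2 \<le> (V^2*V + 2*V*V)*V^2"
    using B q qp by (intro mult_mono power_mono) auto
  have t8: "(h2+l2)*m^3 \<le> V*V^3" using B by (intro mult_mono power_mono) auto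
  have t9: "(h3+l3)*(h2+l2)*m^2 \<le> V*V*V^2" using B by (intro mult_mono power_mono) auto
  have t10: "(h2+l2)^3*m \<le> V^3*V" using B by (intro mult_mono power_mono) auto
  have pw: "V^k \<le> V^6" if "k \<le> 6" for k using V1 that by (intro power_increasing) auto
  have "V^2*V*V^2 = V^5" "V*V*V*V = V^4" "V*V^3 = V^4" "(V^2*V + 2*V*V)^2 = V^6 + 4*V^5 + 4*V^4"
       "(V^2*V + 2*V*V)*V*V^2 + V*(V*V*V + V*V) = V^6 + 2*V^5 + V^4 + V^3"
       "(V*V*V + V*V*V^2)*V = V^4 + V^5" "(V^2*V + 2*V*V)*V^2 = V^5 + 2*V^4"
       "V*V*V^2 = V^4" "V^3*V = V^4"
    by (simp_all add: eval_nat_numeral algebra_simps)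
  note E = this
  have pw3: "V^3 \<le> V^6" by (rule power_increasing) (use V1 in auto)
  have pw4: "V^4 \<le> V^6" by (rule power_increasing) (use V1 in auto)
  have pw5: "V^5 \<le> V^6" by (rule power_increasing) (use V1 in auto)
  have mpos: "m > 0" using m by linarith
  have "Ebound m h1 h2 h3 h4 l2 l3 l4 * m^5 = ((h2+l2)^2*h1*m^2 + (h2+l2)*(h3+l3)*l2*m
   + (h3+l3)*m^3 + (h1^2*m + 2*(h2+l2)*l2)^2 + ((h1^2*m + 2*(h2+l2)*l2)*h1*m^2 + l3*((h3+l3)*h1*m + (h4+l4)*l2))
   + ((h3+l3)*l2*m + (h2+l2)*h1*m^2)*(h2+l2) + (h1^2*m + 2*(h2+l2)*l2)*(h2+l2)^2
   + (h2+l2)*m^3 + (h3+l3)*(h2+l2)*m^2 + (h2+l2)^3*m)"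
    unfolding Ebound_num[OF mpos] using mpos by simp
  also have "... \<le> V^2*V*V^2 + V*V*V*V + V*V^3 + (V^2*V + 2*V*V)^2
     + ((V^2*V + 2*V*V)*V*V^2 + V*(V*V*V + V*V)) + (V*V*V + V*V*V^2)*V + (V^2*V + 2*V*V)*V^2
     + V*V^3 + V*V*V^2 + V^3*V"
    by (rule add_mono[OF add_mono[OF add_mono[OF add_mono[OF add_mono[OF add_mono[OF add_mono[OF
        add_mono[OF add_mono[OF t1 t2] t3] t4] t5] t6] t7] t8] t9] t10])
  also have "... = 2*V^6 + 9*V^5 + 13*V^4 + V^3" by (simp add: eval_nat_numeral algebra_simps)
  also have "... \<le> 30*V^6" using aux30[OF _ pw3 pw4 pw5] V1 by simp
  finally have "Ebound m h1 h2 h3 h4 l2 l3 l4 * m^5 \<le> 30*V^6" .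
  moreover have "30*V^6 \<le> Ksmall N * (h1*h2^2) * m^2"
  proof -
    have "4 \<le> h1*h2^2*m^2"
    proof -
      have "1*2^2*1^2 \<le> h1*h2^2*m^2" using h1 h2 m by (intro mult_mono power_mono) auto
      thus ?thesis by simp
    qed
    note h4 = this
    have K: "Ksmall N = 30*V^6/4" unfolding Ksmall_def V_def ..
    have V6: "30*V^6/4 \<ge> 0" using V1 by simp
    have "30*V^6 = (30*V^6/4)*4" by simp
    also have "... \<le> (30*V^6/4)*(h1*h2^2*m^2)" using h4 V6 by (intro mult_left_mono) auto
    also have "... = Ksmall N * (h1*h2^2)*m^2" using K by (simp add: algebra_simps)
    finally show ?thesis .
  qed
  ultimately have "Ebound m h1 h2 h3 h4 l2 l3 l4 * m^5 \<le> Ksmall N * (h1*h2^2) * m^2" by linarith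
  thus ?thesis using m by (simp add: field_simps eval_nat_numeral)
qed

lemma ff2: "ff x 2 = x*(x-1)" by (simp add: ff_def numeral_2_eq_2)
lemma ff3: "ff x 3 = x*(x-1)*(x-2)" by (simp add: ff_def numeral_3_eq_3 numeral_2_eq_2 algebra_simps)
lemma ff4: "ff x 4 = x*(x-1)*(x-2)*(x-3)" by (simp add: ff_def eval_nat_numeral algebra_simps)
lemma ff1: "ff x 1 = x" by (simp add: ff_def)

lemma ff_nat_nonneg: "ff (real p) k \<ge> 0"
proof (cases "p < k")
  case True
  hence "(\<Prod>j<k. real p - real j) = 0" by (intro prod_zero) (auto intro: bexI[of _ p])
  thus ?thesis unfolding ff_def by linarith
next
  case False
  thus ?thesis unfolding ff_def by (intro prod_nonneg) auto
qed

lemma c_nonneg: "1 \<le> p \<Longrightarrow> ff (real p - 2) 2 \<ge> 0"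
proof (cases "p \<ge> 2")
  case True
  hence e: "real p - 2 = real (p-2)" by (simp add: of_nat_diff)
  show ?thesis unfolding e by (rule ff_nat_nonneg)
next
  case False
  assume "1 \<le> p" hence "p = 1" using False by simp
  thus ?thesis by (simp add: ff2)
qed

lemma chi01_real: "(c::real) \<in> {0,1} \<Longrightarrow> 0 \<le> c \<and> c \<le> 1" by auto

lemma PU1:
  assumes "1 \<le> p" "M > 0"
  shows "(real p - 2) * min (ff (real p) 2 / M) 1 \<le> ff (real p) 3 / M"
proof (cases "p = 1")
  case True thus ?thesis by (simp add: ff2 ff3)
next
  case False
  hence p2: "real p - 2 \<ge> 0" using assms by simp
  have "(real p - 2) * min (ff (real p) 2 / M) 1 \<le> (real p - 2) * (ff (real p) 2 / M)"
    using p2 by (intro mult_left_mono) auto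
  also have "... = ff (real p) 3 / M" by (simp add: ff2 ff3 algebra_simps)
  finally show ?thesis .
qed

lemma aux_cc: "0 \<le> (X::real) \<Longrightarrow> mn \<le> X \<Longrightarrow> mn \<le> Y \<Longrightarrow> cu \<in> {0,1} \<Longrightarrow> cv \<in> {0,1}
   \<Longrightarrow> mn \<le> cu*cv*Y + (1-cv)*X + (1-cu)*X"
  by auto

lemma PU2:
  fixes ap aq xp xq M cu cv :: real
  assumes "0 \<le> ap" "0 \<le> aq" "0 \<le> xp" "0 \<le> xq" "M > 0" "cu \<in> {0,1}" "cv \<in> {0,1}"
  shows "min (ap*aq/M^2) (xp*xq/M)
     \<le> (cu*xp)*(cv*xq)*(1/M) + ap*((1-cv)*aq)*(1/M^2) + ((1-cu)*ap)*aq*(1/M^2)"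
proof -
  have X: "ap*aq/M^2 \<ge> 0" using assms by simp
  have m1: "min (ap*aq/M^2) (xp*xq/M) \<le> ap*aq/M^2" by (rule min.cobounded1)
  have m2: "min (ap*aq/M^2) (xp*xq/M) \<le> xp*xq/M" by (rule min.cobounded2)
  have e: "ap*((1-cv)*aq)*(1/M^2) = (1-cv)*(ap*aq/M^2)" "((1-cu)*ap)*aq*(1/M^2) = (1-cu)*(ap*aq/M^2)"
    "(cu*xp)*(cv*xq)*(1/M) = cu*cv*(xp*xq/M)" using assms(5) by (simp_all add: field_simps)
  show ?thesis unfolding e using aux_cc[OF X m1 m2 assms(6,7)] .
qed

lemma PU4:
  fixes bi aj ai xj M cj :: real
  assumes "0 \<le> bi" "0 \<le> aj" "0 \<le> ai" "0 \<le> xj" "M > 0" "cj \<in> {0,1}"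
  shows "min (bi*aj/M^2) (ai*xj/M) \<le> bi*((1-cj)*aj)*(1/M^2) + ai*(cj*xj)*(1/M)"
proof -
  have m1: "min (bi*aj/M^2) (ai*xj/M) \<le> bi*aj/M^2" by (rule min.cobounded1)
  have m2: "min (bi*aj/M^2) (ai*xj/M) \<le> ai*xj/M" by (rule min.cobounded2)
  have e: "bi*((1-cj)*aj)*(1/M^2) = (1-cj)*(bi*aj/M^2)" "ai*(cj*xj)*(1/M) = cj*(ai*xj/M)"
    using assms(5) by (simp_all add: field_simps)
  show ?thesis unfolding e using assms(6) m1 m2 by auto
qed

lemma x_c_le_b: "2 \<le> p \<Longrightarrow> real p * ff (real p - 2) 2 \<le> ff (real p) 3"
proof -
  assume p: "2 \<le> p"
  have "real p * ff (real p - 2) 2 = real p * (real p - 2) * (real p - 3)" by (simp add: ff2 algebra_simps)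
  also have "... \<le> real p * (real p - 2) * (real p - 1)" using p by (intro mult_left_mono) auto
  also have "... = ff (real p) 3" by (simp add: ff3 algebra_simps)
  finally show ?thesis .
qed

lemma a_c_eq_q: "ff (real p) 2 * ff (real p - 2) 2 = ff (real p) 4"
  by (simp add: ff2 ff4 algebra_simps)

lemma PU5:
  fixes aj xj xw aw M cw :: real
  assumes p: "1 \<le> p" and nn: "0 \<le> aj" "0 \<le> xj" "0 \<le> xw" "0 \<le> aw" and M: "M > 0" and cw: "cw \<in> {0,1}"
  shows "min (real p * aj / M^2) (xj / M) * min (ff (real p - 2) 2 * aw / M^2) ((real p - 2) * xw / M)
     \<le> ff (real p) 2 * aj * (cw*xw) * (1/M^3) + ff (real p) 3 * aj * ((1-cw)*aw) * (1/M^4)"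
    (is "?g * ?k \<le> ?R")
proof -
  have R0: "?R \<ge> 0" using nn M cw ff_nat_nonneg[of p 2] ff_nat_nonneg[of p 3] by auto
  have g0: "?g \<ge> 0" using nn M by auto
  have gb: "?g \<le> real p * aj / M^2" by (rule min.cobounded1)
  show ?thesis
  proof (cases "p \<le> 2")
    case True
    have "?k \<le> 0"
    proof (cases "p = 1")
      case True
      have "(real p - 2) * xw / M \<le> 0" using True nn M by (simp add: divide_nonpos_pos)
      thus ?thesis by linarith
    next
      case False
      hence "p = 2" using \<open>p \<le> 2\<close> p by simp
      thus ?thesis by (simp add: ff2)
    qed
    hence "?g * ?k \<le> 0" using g0 by (simp add: mult_nonneg_nonpos)
    thus ?thesis using R0 by linarith
  next
    case False
    hence p3: "real p \<ge> 3" by simp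
    have c0: "ff (real p - 2) 2 \<ge> 0" using c_nonneg p by simp
    have k0: "?k \<ge> 0" using c0 nn M p3 by auto
    have "?g * ?k \<le> (real p * aj / M^2) * ?k" using gb k0 by (rule mult_right_mono)
    also have "... \<le> ?R"
    proof (cases "cw = 1")
      case True
      have "?k \<le> (real p - 2) * xw / M" by (rule min.cobounded2)
      hence "(real p * aj / M^2) * ?k \<le> (real p * aj / M^2) * ((real p - 2) * xw / M)"
        using nn M by (intro mult_left_mono) auto
      also have "... = (real p * (real p - 2)) * aj * xw * (1/M^3)" using M by (simp add: field_simps eval_nat_numeral)
      also have "... \<le> ff (real p) 2 * aj * xw * (1/M^3)"
        using nn M p3 by (intro mult_right_mono) (auto simp: ff2)
      finally show ?thesis using True by simp
    next
      case False
      hence cw0: "cw = 0" using cw by simp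
      have "?k \<le> ff (real p - 2) 2 * aw / M^2" by (rule min.cobounded1)
      hence "(real p * aj / M^2) * ?k \<le> (real p * aj / M^2) * (ff (real p - 2) 2 * aw / M^2)"
        using nn M by (intro mult_left_mono) auto
      also have "... = (real p * ff (real p - 2) 2) * aj * aw * (1/M^4)" using M by (simp add: field_simps eval_nat_numeral)
      also have "... \<le> ff (real p) 3 * aj * aw * (1/M^4)"
        using nn M p3 x_c_le_b[of p] by (intro mult_right_mono) auto
      finally show ?thesis using cw0 by simp
    qed
    finally show ?thesis .
  qed
qed

lemma gen_e1: "((a::real)*(1/M) + b*(1/M^2) + c*(1/M^2))*r = a*r*(1/M) + b*r*(1/M^2) + c*r*(1/M^2)"
  by (simp add: algebra_simps)
lemma gen_e2: "(M::real) > 0 \<Longrightarrow> (A*(1/M) + B*(1/M^2))*(C/M^2) = A*C*(1/M^3) + B*C*(1/M^4)"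
  by (simp add: field_simps eval_nat_numeral)

lemma PU3:
  fixes aj xj M ci cj cw :: real
  assumes p: "1 \<le> p" and r: "1 \<le> r" and nn: "0 \<le> aj" "0 \<le> xj" and M: "M > 0"
    and c: "ci \<in> {0,1}" "cj \<in> {0,1}" "cw \<in> {0,1}"
  shows "min (ff (real p) 2 * aj / M^2) (real p * xj / M) * min (ff (real p - 2) 2 * ff (real r) 2 / M^2) 1 * (real r - 2)
    \<le> (ci*real p)*(cj*xj)*(cw*real r)*(1/M) + ff (real p) 2*((1-cj)*aj)*(cw*real r)*(1/M^2)
      + ((1-ci)*ff (real p) 2)*aj*(cw*real r)*(1/M^2)
      + ff (real p) 3*(cj*xj)*((1-cw)*ff (real r) 3)*(1/M^3)
      + ff (real p) 4*((1-cj)*aj)*((1-cw)*ff (real r) 3)*(1/M^4)"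
    (is "?f * ?m * ?t \<le> ?R")
proof -
  define ai where "ai = ff (real p) 2"
  define ci2 where "ci2 = ff (real p - 2) 2"
  have ai0: "ai \<ge> 0" unfolding ai_def by (rule ff_nat_nonneg)
  have c0: "ci2 \<ge> 0" unfolding ci2_def using c_nonneg p by simp
  have ar0: "ff (real r) 2 \<ge> 0" "ff (real r) 3 \<ge> 0" "ff (real p) 3 \<ge> 0" "ff (real p) 4 \<ge> 0"
    by (rule ff_nat_nonneg)+
  have f0: "?f \<ge> 0" using ai0 nn M p unfolding ai_def by auto
  have fb: "?f \<le> (ci*real p)*(cj*xj)*(1/M) + ai*((1-cj)*aj)*(1/M^2) + ((1-ci)*ai)*aj*(1/M^2)"
    unfolding ai_def by (rule PU2) (use ai0 nn M c p in \<open>auto simp: ai_def\<close>)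
  show ?thesis
  proof (cases "cw = 1")
    case True
    have mt: "?m * ?t \<le> real r"
    proof (cases "r = 1")
      case True thus ?thesis by (simp add: ff2)
    next
      case False
      hence "real r - 2 \<ge> 0" using r by simp
      moreover have "?m \<le> 1" by (rule min.cobounded2)
      moreover have "?m \<ge> 0" using c0 ar0 M unfolding ci2_def by auto
      ultimately have "?m * ?t \<le> 1 * (real r - 2)" by (intro mult_right_mono) auto
      thus ?thesis by simp
    qed
    have "?f * ?m * ?t = ?f * (?m * ?t)" by (simp add: mult.assoc)
    also have "... \<le> ?f * real r" using mt f0 by (intro mult_left_mono) auto
    also have "... \<le> ((ci*real p)*(cj*xj)*(1/M) + ai*((1-cj)*aj)*(1/M^2) + ((1-ci)*ai)*aj*(1/M^2)) * real r"
      using fb by (intro mult_right_mono) auto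
    also have "... = ?R" using True unfolding ai_def by (simp only: gen_e1) simp
    finally show ?thesis .
  next
    case False
    hence cw0: "cw = 0" using c by simp
    have mt: "?m * ?t \<le> ci2 * ff (real r) 3 / M^2"
    proof (cases "r = 1")
      case True thus ?thesis using c0 M by (simp add: ff2 ff3)
    next
      case False
      hence r2: "real r - 2 \<ge> 0" using r by simp
      have "?m \<le> ci2 * ff (real r) 2 / M^2" unfolding ci2_def by (rule min.cobounded1)
      hence "?m * ?t \<le> (ci2 * ff (real r) 2 / M^2) * (real r - 2)" using r2 by (intro mult_right_mono) auto
      also have "... = ci2 * ff (real r) 3 / M^2" by (simp add: ff2 ff3 algebra_simps)
      finally show ?thesis .
    qed
    have fc: "?f * ci2 \<le> ff (real p) 3 * (cj*xj) * (1/M) + ff (real p) 4 * ((1-cj)*aj) * (1/M^2)"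
    proof (cases "p = 1")
      case True
      hence "ai = 0" unfolding ai_def by (simp add: ff2)
      hence "?f \<le> 0" using M nn True unfolding ai_def by (simp add: ff2)
      hence "?f * ci2 \<le> 0" using c0 by (simp add: mult_nonpos_nonneg)
      moreover have "ff (real p) 3 * (cj*xj) * (1/M) + ff (real p) 4 * ((1-cj)*aj) * (1/M^2) \<ge> 0"
        using ar0 nn M c by auto
      ultimately show ?thesis by linarith
    next
      case False
      hence p2: "2 \<le> p" using p by simp
      show ?thesis
      proof (cases "cj = 1")
        case True
        have "?f \<le> real p * xj / M" by (rule min.cobounded2)
        hence "?f * ci2 \<le> (real p * xj / M) * ci2" using c0 by (intro mult_right_mono)
        also have "... = (real p * ci2) * xj * (1/M)" by simp
        also have "... \<le> ff (real p) 3 * xj * (1/M)"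
          using x_c_le_b[OF p2] nn M unfolding ci2_def by (intro mult_right_mono) auto
        finally show ?thesis using True by simp
      next
        case False
        hence cj0: "cj = 0" using c by simp
        have "?f \<le> ai * aj / M^2" unfolding ai_def by (rule min.cobounded1)
        hence "?f * ci2 \<le> (ai * aj / M^2) * ci2" using c0 by (intro mult_right_mono)
        also have "... = (ai * ci2) * aj * (1/M^2)" by simp
        also have "... = ff (real p) 4 * aj * (1/M^2)" unfolding ai_def ci2_def a_c_eq_q ..
        finally show ?thesis using cj0 by simp
      qed
    qed
    have "?f * ?m * ?t = ?f * (?m * ?t)" by (simp add: mult.assoc)
    also have "... \<le> ?f * (ci2 * ff (real r) 3 / M^2)" using mt f0 by (intro mult_left_mono) auto
    also have "... = (?f * ci2) * (ff (real r) 3 / M^2)" by simp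
    also have "... \<le> (ff (real p) 3 * (cj*xj) * (1/M) + ff (real p) 4 * ((1-cj)*aj) * (1/M^2)) * (ff (real r) 3 / M^2)"
      using fc ar0 M by (intro mult_right_mono) auto
    also have "... = ?R" using cw0 by (simp only: gen_e2[OF M]) simp
    finally show ?thesis .
  qed
qed

definition chi :: "nat \<Rightarrow> nat \<Rightarrow> real" where "chi h i = (if i \<le> h then 1 else 0)"

lemma chi01: "chi h i \<in> {0,1}" by (simp add: chi_def)

lemma sumH: "h \<le> n \<Longrightarrow> (\<Sum>i\<in>{1..n}. chi h i * f i) = (\<Sum>i\<in>{1..h}. f i)"
proof -
  assume hn: "h \<le> n"
  have "(\<Sum>i\<in>{1..n}. chi h i * f i) = (\<Sum>i\<in>{1..n}. if i \<le> h then f i else 0)"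
    by (intro sum.cong) (auto simp: chi_def)
  also have "... = sum f {i\<in>{1..n}. i \<le> h}" by (rule sum.inter_filter[symmetric]) simp
  also have "{i\<in>{1..n}. i \<le> h} = {1..h}" using hn by auto
  finally show ?thesis .
qed

lemma sumL: "h \<le> n \<Longrightarrow> (\<Sum>i\<in>{1..n}. (1 - chi h i) * f i) = (\<Sum>i\<in>{1..n}. f i) - (\<Sum>i\<in>{1..h}. f i)"
proof -
  assume hn: "h \<le> n"
  have "(\<Sum>i\<in>{1..n}. (1 - chi h i) * f i) = (\<Sum>i\<in>{1..n}. f i - chi h i * f i)"
    by (intro sum.cong) (auto simp: algebra_simps)
  also have "... = (\<Sum>i\<in>{1..n}. f i) - (\<Sum>i\<in>{1..n}. chi h i * f i)" by (rule sum_subtractf)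
  finally show ?thesis using sumH[OF hn] by simp
qed

lemma HS: "h \<le> n \<Longrightarrow> (\<Sum>i\<in>{1..n}. chi h i * ff (real (d i)) k) = Hk k h d"
  unfolding Hk_def by (rule sumH)
lemma LS: "h \<le> n \<Longrightarrow> (\<Sum>i\<in>{1..n}. (1 - chi h i) * ff (real (d i)) k) = Lk k h n d"
  unfolding Hk_def Lk_def Mk_def by (rule sumL)
lemma HS1: "h \<le> n \<Longrightarrow> (\<Sum>i\<in>{1..n}. chi h i * real (d i)) = Hk 1 h d"
  using HS[of h n d 1] by (simp only: ff1)
lemma MS: "(\<Sum>i\<in>{1..n}. ff (real (d i)) k) = Mk k n d" by (simp add: Mk_def)
lemma MS1: "(\<Sum>i\<in>{1..n}. real (d i)) = Mk 1 n d" unfolding Mk_def ff1 by (rule refl)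

lemma sep1: "(\<Sum>w\<in>C. c * r w * (k::real)) = c * sum r C * k"
  by (simp only: sum_distrib_left sum_distrib_right)
lemma sep2: "(\<Sum>u\<in>A. \<Sum>v\<in>B. p u * q v * (k::real)) = sum p A * sum q B * k"
proof -
  have "(\<Sum>u\<in>A. \<Sum>v\<in>B. p u * q v * k) = (\<Sum>u\<in>A. p u * (sum q B * k))"
    by (simp only: sep1 mult.assoc[symmetric])
  also have "... = sum p A * (sum q B * k)" by (simp add: sum_distrib_right)
  finally show ?thesis by (simp add: mult.assoc)
qed
lemma sep3: "(\<Sum>u\<in>A. \<Sum>v\<in>B. \<Sum>w\<in>C. p u * q v * r w * (k::real)) = sum p A * sum q B * sum r C * k"
proof -
  have "(\<Sum>u\<in>A. \<Sum>v\<in>B. \<Sum>w\<in>C. p u * q v * r w * k) = (\<Sum>u\<in>A. \<Sum>v\<in>B. p u * q v * (sum r C * k))"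
    using sep1[of "p _ * q _" r k C] by (simp add: mult.assoc)
  also have "... = sum p A * sum q B * (sum r C * k)" by (rule sep2)
  finally show ?thesis by (simp add: mult.assoc)
qed

lemma pair_le:
  fixes F G :: "nat \<Rightarrow> nat \<Rightarrow> real"
  assumes S: "S \<subseteq> {1..n} \<times> {1..n}"
    and FG: "\<And>u v. (u,v) \<in> S \<Longrightarrow> F u v \<le> G u v"
    and G0: "\<And>u v. u \<in> {1..n} \<Longrightarrow> v \<in> {1..n} \<Longrightarrow> 0 \<le> G u v"
  shows "(\<Sum>(u,v)\<in>S. F u v) \<le> (\<Sum>u\<in>{1..n}. \<Sum>v\<in>{1..n}. G u v)"
proof -
  have fin: "finite ({1..n} \<times> {1..n})" by simp
  have "(\<Sum>(u,v)\<in>S. F u v) \<le> (\<Sum>(u,v)\<in>S. G u v)"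
    by (intro sum_mono) (use FG in auto)
  also have "... \<le> (\<Sum>(u,v)\<in>{1..n} \<times> {1..n}. G u v)"
    by (rule sum_mono2[OF fin S]) (use G0 in auto)
  also have "... = (\<Sum>u\<in>{1..n}. \<Sum>v\<in>{1..n}. G u v)" by (rule sum.cartesian_product[symmetric])
  finally show ?thesis .
qed

lemma U1_le:
  assumes dpos: "\<forall>i\<in>{1..n}. 1 \<le> d i" and M: "Mk 1 n d > 0"
  shows "U1 n d \<le> Mk 3 n d / Mk 1 n d"
proof -
  have "U1 n d = (\<Sum>v\<in>{1..n}. (real (d v) - 2) * min (ff (d v) 2 / Mk 1 n d) 1)"
    unfolding U1_def Let_def ..
  also have "... \<le> (\<Sum>v\<in>{1..n}. ff (real (d v)) 3 / Mk 1 n d)"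
    by (intro sum_mono PU1) (use dpos M in auto)
  also have "... = Mk 3 n d / Mk 1 n d" unfolding Mk_def[of 3] by (simp add: sum_divide_distrib)
  finally show ?thesis .
qed

lemma U2_le:
  assumes hn: "h \<le> n" and dpos: "\<forall>i\<in>{1..n}. 1 \<le> d i" and M: "Mk 1 n d > 0"
  shows "0 \<le> U2 n d"
    "U2 n d \<le> (Hk 1 h d)^2 / Mk 1 n d + 2 * Mk 2 n d * Lk 2 h n d / (Mk 1 n d)^2"
proof -
  define M1 where "M1 = Mk 1 n d"
  have M1: "M1 > 0" using M unfolding M1_def .
  define S where "S = {(u,v). u \<in> {1..n} \<and> v \<in> {1..n} \<and> u < v}"
  have U2e: "U2 n d = (\<Sum>(u,v)\<in>S. min (ff (d u) 2 * ff (d v) 2 / M1^2) (real (d u) * real (d v) / M1))"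
    unfolding U2_def Let_def S_def M1_def ..
  show "0 \<le> U2 n d" unfolding U2e
    by (intro sum_nonneg) (auto simp: ff_nat_nonneg M1 less_imp_le)
  have "U2 n d \<le> (\<Sum>u\<in>{1..n}. \<Sum>v\<in>{1..n}.
       (chi h u * real (d u))*(chi h v * real (d v))*(1/M1) + ff (real (d u)) 2 * ((1 - chi h v) * ff (real (d v)) 2) * (1/M1^2)
        + ((1 - chi h u) * ff (real (d u)) 2) * ff (real (d v)) 2 * (1/M1^2))"
    unfolding U2e
  proof (rule pair_le)
    show "S \<subseteq> {1..n} \<times> {1..n}" unfolding S_def by auto
  next
    fix u v assume "(u,v) \<in> S"
    hence uv: "u \<in> {1..n}" "v \<in> {1..n}" unfolding S_def by auto
    show "min (ff (d u) 2 * ff (d v) 2 / M1^2) (real (d u) * real (d v) / M1) \<le>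
       (chi h u * real (d u))*(chi h v * real (d v))*(1/M1) + ff (real (d u)) 2 * ((1 - chi h v) * ff (real (d v)) 2) * (1/M1^2)
        + ((1 - chi h u) * ff (real (d u)) 2) * ff (real (d v)) 2 * (1/M1^2)"
      by (rule PU2) (auto simp: ff_nat_nonneg M1 chi_def)
  next
    fix u v assume "u \<in> {1..n}" "v \<in> {1..n}"
    have c: "0 \<le> chi h u" "chi h u \<le> 1" "0 \<le> chi h v" "chi h v \<le> 1" by (auto simp: chi_def)
    show "0 \<le> (chi h u * real (d u))*(chi h v * real (d v))*(1/M1) + ff (real (d u)) 2 * ((1 - chi h v) * ff (real (d v)) 2) * (1/M1^2)
        + ((1 - chi h u) * ff (real (d u)) 2) * ff (real (d v)) 2 * (1/M1^2)"
      using c M1 ff_nat_nonneg[of "d u" 2] ff_nat_nonneg[of "d v" 2] by (intro add_nonneg_nonneg mult_nonneg_nonneg) auto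
  qed
  also have "... = Hk 1 h d * Hk 1 h d * (1/M1) + Mk 2 n d * Lk 2 h n d * (1/M1^2) + Lk 2 h n d * Mk 2 n d * (1/M1^2)"
    by (simp only: sum.distrib sep2 HS1[OF hn] LS[OF hn] MS)
  also have "... = (Hk 1 h d)^2 / Mk 1 n d + 2 * Mk 2 n d * Lk 2 h n d / (Mk 1 n d)^2"
    unfolding M1_def by (simp add: power2_eq_square field_simps)
  finally show "U2 n d \<le> (Hk 1 h d)^2 / Mk 1 n d + 2 * Mk 2 n d * Lk 2 h n d / (Mk 1 n d)^2" .
qed

lemma U3_le:
  assumes hn: "h \<le> n" and dpos: "\<forall>i\<in>{1..n}. 1 \<le> d i" and M: "Mk 1 n d > 0"
  shows "U3 n d \<le> ((Hk 1 h d)^2 / Mk 1 n d + 2 * Mk 2 n d * Lk 2 h n d / (Mk 1 n d)^2) * Hk 1 h d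
     + Lk 3 h n d * (Mk 3 n d * Hk 1 h d / Mk 1 n d + Mk 4 n d * Lk 2 h n d / (Mk 1 n d)^2) / (Mk 1 n d)^2"
proof -
  define M1 where "M1 = Mk 1 n d"
  have M1: "M1 > 0" using M unfolding M1_def .
  define S where "S = {(i,j). i \<in> {1..n} \<and> j \<in> {1..n} \<and> i \<noteq> j}"
  define G where "G = (\<lambda>i j w. (chi h i*real (d i))*(chi h j*real (d j))*(chi h w*real (d w))*(1/M1)
     + ff (real (d i)) 2*((1-chi h j)*ff (real (d j)) 2)*(chi h w*real (d w))*(1/M1^2)
     + ((1-chi h i)*ff (real (d i)) 2)*ff (real (d j)) 2*(chi h w*real (d w))*(1/M1^2)
     + ff (real (d i)) 3*(chi h j*real (d j))*((1-chi h w)*ff (real (d w)) 3)*(1/M1^3)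
     + ff (real (d i)) 4*((1-chi h j)*ff (real (d j)) 2)*((1-chi h w)*ff (real (d w)) 3)*(1/M1^4))"
  have U3e: "U3 n d = (\<Sum>(i,j)\<in>S. \<Sum>w\<in>{1..n}. min (ff (d i) 2 * ff (d j) 2 / M1^2) (real (d i) * real (d j) / M1)
        * min (ff (real (d i) - 2) 2 * ff (d w) 2 / M1^2) 1 * (real (d w) - 2))"
    unfolding U3_def Let_def S_def M1_def ..
  have "U3 n d \<le> (\<Sum>i\<in>{1..n}. \<Sum>j\<in>{1..n}. \<Sum>w\<in>{1..n}. G i j w)"
    unfolding U3e
  proof (rule pair_le)
    show "S \<subseteq> {1..n} \<times> {1..n}" unfolding S_def by auto
  next
    fix i j assume "(i,j) \<in> S"
    hence ij: "i \<in> {1..n}" "j \<in> {1..n}" unfolding S_def by auto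
    show "(\<Sum>w\<in>{1..n}. min (ff (d i) 2 * ff (d j) 2 / M1^2) (real (d i) * real (d j) / M1)
        * min (ff (real (d i) - 2) 2 * ff (d w) 2 / M1^2) 1 * (real (d w) - 2)) \<le> (\<Sum>w\<in>{1..n}. G i j w)"
      unfolding G_def
      by (intro sum_mono PU3) (use ij dpos in \<open>auto simp: ff_nat_nonneg M1 chi_def\<close>)
  next
    fix i j assume "i \<in> {1..n}" "j \<in> {1..n}"
    show "0 \<le> (\<Sum>w\<in>{1..n}. G i j w)" unfolding G_def
    proof (intro sum_nonneg)
      fix w
      have c: "0 \<le> chi h i" "chi h i \<le> 1" "0 \<le> chi h j" "chi h j \<le> 1" "0 \<le> chi h w" "chi h w \<le> 1"
        by (auto simp: chi_def)
      show "0 \<le> (chi h i*real (d i))*(chi h j*real (d j))*(chi h w*real (d w))*(1/M1)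
     + ff (real (d i)) 2*((1-chi h j)*ff (real (d j)) 2)*(chi h w*real (d w))*(1/M1^2)
     + ((1-chi h i)*ff (real (d i)) 2)*ff (real (d j)) 2*(chi h w*real (d w))*(1/M1^2)
     + ff (real (d i)) 3*(chi h j*real (d j))*((1-chi h w)*ff (real (d w)) 3)*(1/M1^3)
     + ff (real (d i)) 4*((1-chi h j)*ff (real (d j)) 2)*((1-chi h w)*ff (real (d w)) 3)*(1/M1^4)"
        using c M1 ff_nat_nonneg[of "d i"] ff_nat_nonneg[of "d j"] ff_nat_nonneg[of "d w"]
        by (intro add_nonneg_nonneg mult_nonneg_nonneg) auto
    qed
  qed
  also have "... = Hk 1 h d * Hk 1 h d * Hk 1 h d * (1/M1) + Mk 2 n d * Lk 2 h n d * Hk 1 h d * (1/M1^2)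
      + Lk 2 h n d * Mk 2 n d * Hk 1 h d * (1/M1^2) + Mk 3 n d * Hk 1 h d * Lk 3 h n d * (1/M1^3)
      + Mk 4 n d * Lk 2 h n d * Lk 3 h n d * (1/M1^4)"
    unfolding G_def by (simp only: sum.distrib sep3 HS1[OF hn] LS[OF hn] MS)
  also have "... = ((Hk 1 h d)^2 / Mk 1 n d + 2 * Mk 2 n d * Lk 2 h n d / (Mk 1 n d)^2) * Hk 1 h d
     + Lk 3 h n d * (Mk 3 n d * Hk 1 h d / Mk 1 n d + Mk 4 n d * Lk 2 h n d / (Mk 1 n d)^2) / (Mk 1 n d)^2"
    unfolding M1_def using M by (simp add: field_simps eval_nat_numeral)
  finally show ?thesis .
qed

lemma U4_le:
  assumes hn: "h \<le> n" and dpos: "\<forall>i\<in>{1..n}. 1 \<le> d i" and M: "Mk 1 n d > 0"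
  shows "U4 n d \<le> Mk 3 n d * Lk 2 h n d / (Mk 1 n d)^2 + Mk 2 n d * Hk 1 h d / Mk 1 n d"
proof -
  define M1 where "M1 = Mk 1 n d"
  have M1: "M1 > 0" using M unfolding M1_def .
  define S where "S = {(i,j). i \<in> {1..n} \<and> j \<in> {1..n} \<and> i \<noteq> j}"
  have U4e: "U4 n d = (\<Sum>(i,j)\<in>S. min (ff (d i) 3 * ff (d j) 2 / M1^2) (ff (d i) 2 * real (d j) / M1))"
    unfolding U4_def Let_def S_def M1_def ..
  have "U4 n d \<le> (\<Sum>i\<in>{1..n}. \<Sum>j\<in>{1..n}. ff (real (d i)) 3*((1-chi h j)*ff (real (d j)) 2)*(1/M1^2)
       + ff (real (d i)) 2*(chi h j*real (d j))*(1/M1))"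
    unfolding U4e
  proof (rule pair_le)
    show "S \<subseteq> {1..n} \<times> {1..n}" unfolding S_def by auto
  next
    fix i j assume "(i,j) \<in> S"
    show "min (ff (d i) 3 * ff (d j) 2 / M1^2) (ff (d i) 2 * real (d j) / M1) \<le>
      ff (real (d i)) 3*((1-chi h j)*ff (real (d j)) 2)*(1/M1^2) + ff (real (d i)) 2*(chi h j*real (d j))*(1/M1)"
      by (rule PU4) (auto simp: ff_nat_nonneg M1 chi_def)
  next
    fix i j
    have c: "0 \<le> chi h j" "chi h j \<le> 1" by (auto simp: chi_def)
    show "0 \<le> ff (real (d i)) 3*((1-chi h j)*ff (real (d j)) 2)*(1/M1^2) + ff (real (d i)) 2*(chi h j*real (d j))*(1/M1)"
      using c M1 ff_nat_nonneg[of "d i"] ff_nat_nonneg[of "d j"]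
      by (intro add_nonneg_nonneg mult_nonneg_nonneg) auto
  qed
  also have "... = Mk 3 n d * Lk 2 h n d * (1/M1^2) + Mk 2 n d * Hk 1 h d * (1/M1)"
    by (simp only: sum.distrib sep2 HS1[OF hn] LS[OF hn] MS)
  also have "... = Mk 3 n d * Lk 2 h n d / (Mk 1 n d)^2 + Mk 2 n d * Hk 1 h d / Mk 1 n d"
    unfolding M1_def by simp
  finally show ?thesis .
qed

lemma U5_le:
  assumes hn: "h \<le> n" and dpos: "\<forall>i\<in>{1..n}. 1 \<le> d i" and M: "Mk 1 n d > 0"
  shows "U5 n d \<le> Mk 2 n d * (Mk 2 n d * Hk 1 h d / Mk 1 n d + Mk 3 n d * Lk 2 h n d / (Mk 1 n d)^2) / (Mk 1 n d)^2"
proof -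
  define M1 where "M1 = Mk 1 n d"
  have M1: "M1 > 0" using M unfolding M1_def .
  define S where "S = {(i,j). i \<in> {1..n} \<and> j \<in> {1..n} \<and> i \<noteq> j}"
  define G where "G = (\<lambda>i j w. ff (real (d i)) 2 * ff (real (d j)) 2 * (chi h w*real (d w)) * (1/M1^3)
      + ff (real (d i)) 3 * ff (real (d j)) 2 * ((1-chi h w)*ff (real (d w)) 2) * (1/M1^4))"
  have U5e: "U5 n d = (\<Sum>(i,j)\<in>S. \<Sum>w\<in>{1..n}. min (real (d i) * ff (d j) 2 / M1^2) (real (d j) / M1)
        * min (ff (real (d i) - 2) 2 * ff (d w) 2 / M1^2) ((real (d i) - 2) * real (d w) / M1))"
    unfolding U5_def Let_def S_def M1_def ..
  have "U5 n d \<le> (\<Sum>i\<in>{1..n}. \<Sum>j\<in>{1..n}. \<Sum>w\<in>{1..n}. G i j w)"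
    unfolding U5e
  proof (rule pair_le)
    show "S \<subseteq> {1..n} \<times> {1..n}" unfolding S_def by auto
  next
    fix i j assume "(i,j) \<in> S"
    hence ij: "i \<in> {1..n}" "j \<in> {1..n}" unfolding S_def by auto
    show "(\<Sum>w\<in>{1..n}. min (real (d i) * ff (d j) 2 / M1^2) (real (d j) / M1)
        * min (ff (real (d i) - 2) 2 * ff (d w) 2 / M1^2) ((real (d i) - 2) * real (d w) / M1)) \<le> (\<Sum>w\<in>{1..n}. G i j w)"
      unfolding G_def
      by (intro sum_mono PU5) (use ij dpos in \<open>auto simp: ff_nat_nonneg M1 chi_def\<close>)
  next
    fix i j
    show "0 \<le> (\<Sum>w\<in>{1..n}. G i j w)" unfolding G_def
    proof (intro sum_nonneg)
      fix w
      have c: "0 \<le> chi h w" "chi h w \<le> 1" by (auto simp: chi_def)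
      show "0 \<le> ff (real (d i)) 2 * ff (real (d j)) 2 * (chi h w*real (d w)) * (1/M1^3)
      + ff (real (d i)) 3 * ff (real (d j)) 2 * ((1-chi h w)*ff (real (d w)) 2) * (1/M1^4)"
        using c M1 ff_nat_nonneg[of "d i"] ff_nat_nonneg[of "d j"] ff_nat_nonneg[of "d w"]
        by (intro add_nonneg_nonneg mult_nonneg_nonneg) auto
    qed
  qed
  also have "... = Mk 2 n d * Mk 2 n d * Hk 1 h d * (1/M1^3) + Mk 3 n d * Mk 2 n d * Lk 2 h n d * (1/M1^4)"
    unfolding G_def by (simp only: sum.distrib sep3 HS1[OF hn] LS[OF hn] MS)
  also have "... = Mk 2 n d * (Mk 2 n d * Hk 1 h d / Mk 1 n d + Mk 3 n d * Lk 2 h n d / (Mk 1 n d)^2) / (Mk 1 n d)^2"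
    unfolding M1_def using M by (simp add: field_simps eval_nat_numeral)
  finally show ?thesis .
qed

lemma HL: "Hk k h d + Lk k h n d = Mk k n d" unfolding Lk_def by simp

lemma M2_nonneg: "Mk k n d \<ge> 0" unfolding Mk_def by (intro sum_nonneg) (simp add: ff_nat_nonneg)

lemma xi_le_E:
  assumes hn: "h \<le> n" and dpos: "\<forall>i\<in>{1..n}. 1 \<le> d i" and M: "Mk 1 n d > 0"
  shows "xi n d \<le> Ebound (Mk 1 n d) (Hk 1 h d) (Hk 2 h d) (Hk 3 h d) (Hk 4 h d) (Lk 2 h n d) (Lk 3 h n d) (Lk 4 h n d)"
proof -
  define m where "m = Mk 1 n d"
  define m2 where "m2 = Mk 2 n d"
  define m3 where "m3 = Mk 3 n d"
  define m4 where "m4 = Mk 4 n d"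
  define h1 where "h1 = Hk 1 h d"
  define l2 where "l2 = Lk 2 h n d"
  define l3 where "l3 = Lk 3 h n d"
  define U2b where "U2b = h1^2/m + 2*m2*l2/m^2"
  have mp: "m > 0" using M unfolding m_def .
  have m2p: "m2 \<ge> 0" unfolding m2_def by (rule M2_nonneg)
  note b1 = U1_le[OF dpos M, folded m_def m3_def]
  note b2 = U2_le[OF hn dpos M, folded m_def m2_def h1_def l2_def, folded U2b_def]
  note b3 = U3_le[OF hn dpos M, folded m_def m2_def m3_def m4_def h1_def l2_def l3_def, folded U2b_def]
  note b4 = U4_le[OF hn dpos M, folded m_def m2_def m3_def h1_def l2_def]
  note b5 = U5_le[OF hn dpos M, folded m_def m2_def m3_def h1_def l2_def]
  have xe: "xi n d = U5 n d + (U1 n d + (U2 n d)^2 + U3 n d) / m + U4 n d * m2 / m^2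
     + U2 n d * m2^2 / m^3 + m2 / m^2 + m3 * m2 / m^3 + m2^3 / m^4"
    unfolding xi_def Let_def m_def m2_def m3_def ..
  have Ee: "Ebound (Mk 1 n d) (Hk 1 h d) (Hk 2 h d) (Hk 3 h d) (Hk 4 h d) (Lk 2 h n d) (Lk 3 h n d) (Lk 4 h n d)
    = m2*(m2*h1/m + m3*l2/m^2)/m^2
   + (m3/m + U2b^2 + (U2b*h1 + l3*(m3*h1/m + m4*l2/m^2)/m^2))/m
   + (m3*l2/m^2 + m2*h1/m)*m2/m^2 + U2b*m2^2/m^3 + m2/m^2 + m3*m2/m^3 + m2^3/m^4"
    unfolding Ebound_def Let_def HL m_def m2_def m3_def m4_def h1_def l2_def l3_def U2b_def ..
  have s2: "(U2 n d)^2 \<le> U2b^2" using b2 by (intro power_mono) auto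
  have t2: "(U1 n d + (U2 n d)^2 + U3 n d) / m \<le> (m3/m + U2b^2 + (U2b*h1 + l3*(m3*h1/m + m4*l2/m^2)/m^2))/m"
    using b1 s2 b3 mp by (intro divide_right_mono add_mono) auto
  have t3: "U4 n d * m2 / m^2 \<le> (m3*l2/m^2 + m2*h1/m)*m2/m^2"
    using b4 m2p mp by (intro divide_right_mono mult_right_mono) auto
  have t4: "U2 n d * m2^2 / m^3 \<le> U2b*m2^2/m^3"
    using b2 m2p mp by (intro divide_right_mono mult_right_mono) auto
  show ?thesis unfolding xe Ee using b5 t2 t3 t4 by linarith
qed

lemma CS_pair: "0 \<le> (x::real) \<Longrightarrow> 0 \<le> y \<Longrightarrow> (x*(x-1))*(y*(y-1)) \<le> (x*(x-1)^2)*y*(1/2) + x*(y*(y-1)^2)*(1/2)"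
proof -
  assume x: "0 \<le> x" and y: "0 \<le> y"
  have "0 \<le> x*y*((x-1)-(y-1))^2" using x y by simp
  moreover have "(x*(x-1)^2)*y*(1/2) + x*(y*(y-1)^2)*(1/2) - (x*(x-1))*(y*(y-1)) = x*y*((x-1)-(y-1))^2/2"
    by (simp add: power2_eq_square algebra_simps)
  ultimately show ?thesis by linarith
qed

lemma CS_M: "(Mk 2 n d)^2 \<le> Mk 1 n d * (Mk 3 n d + Mk 2 n d)"
proof -
  define x where "x = (\<lambda>i. real (d i))"
  have x0: "\<And>i. 0 \<le> x i" unfolding x_def by simp
  have M2: "Mk 2 n d = (\<Sum>i\<in>{1..n}. x i * (x i - 1))" unfolding Mk_def x_def by (simp add: ff2)
  have M1: "Mk 1 n d = (\<Sum>i\<in>{1..n}. x i)" unfolding x_def by (rule MS1[symmetric])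
  have M32: "Mk 3 n d + Mk 2 n d = (\<Sum>i\<in>{1..n}. x i * (x i - 1)^2)"
    unfolding Mk_def x_def sum.distrib[symmetric]
    by (intro sum.cong) (auto simp: ff2 ff3 power2_eq_square algebra_simps)
  have "(Mk 2 n d)^2 = (\<Sum>i\<in>{1..n}. \<Sum>j\<in>{1..n}. (x i * (x i - 1)) * (x j * (x j - 1)))"
    unfolding M2 power2_eq_square sum_product ..
  also have "... \<le> (\<Sum>i\<in>{1..n}. \<Sum>j\<in>{1..n}. (x i * (x i - 1)^2) * x j * (1/2) + x i * (x j * (x j - 1)^2) * (1/2))"
    by (intro sum_mono CS_pair x0)
  also have "... = (\<Sum>i\<in>{1..n}. x i * (x i - 1)^2) * (\<Sum>i\<in>{1..n}. x i) * (1/2)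
      + (\<Sum>i\<in>{1..n}. x i) * (\<Sum>i\<in>{1..n}. x i * (x i - 1)^2) * (1/2)"
    by (simp only: sum.distrib sep2)
  also have "... = Mk 1 n d * (Mk 3 n d + Mk 2 n d)" unfolding M32 M1 by (simp add: algebra_simps)
  finally show ?thesis .
qed

lemma ff_le_pow: "ff (real p) k \<le> real p ^ k"
proof (cases "p < k")
  case True
  hence "(\<Prod>j<k. real p - real j) = 0" by (intro prod_zero) (auto intro: bexI[of _ p])
  moreover have "0 \<le> real p ^ k" by simp
  ultimately show ?thesis unfolding ff_def by linarith
next
  case False
  have "(\<Prod>j<k. real p - real j) \<le> (\<Prod>j<k. real p)"
    by (intro prod_mono) (use False in auto)
  thus ?thesis unfolding ff_def by simp
qed

lemma d_le_M: "i \<in> {1..n} \<Longrightarrow> real (d i) \<le> Mk 1 n d"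
  unfolding Mk_def ff1 by (rule member_le_sum) auto

lemma Mk_le_pow:
  assumes "1 \<le> k"
  shows "Mk k n d \<le> (Mk 1 n d)^k"
proof -
  have "Mk k n d \<le> (\<Sum>i\<in>{1..n}. real (d i) * (Mk 1 n d)^(k-1))"
    unfolding Mk_def[of k]
  proof (intro sum_mono)
    fix i assume i: "i \<in> {1..n}"
    have "ff (real (d i)) k \<le> real (d i) ^ k" by (rule ff_le_pow)
    also have "... = real (d i) * real (d i) ^ (k-1)" using assms by (cases k) auto
    also have "... \<le> real (d i) * (Mk 1 n d)^(k-1)"
      using d_le_M[OF i] by (intro mult_left_mono power_mono) auto
    finally show "ff (real (d i)) k \<le> real (d i) * (Mk 1 n d)^(k-1)" .
  qed
  also have "... = Mk 1 n d * (Mk 1 n d)^(k-1)" by (simp only: sum_distrib_right[symmetric] MS1)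
  also have "... = (Mk 1 n d)^k" using assms by (cases k) auto
  finally show ?thesis .
qed

lemma Hk_nonneg: "Hk k h d \<ge> 0" unfolding Hk_def by (intro sum_nonneg) (simp add: ff_nat_nonneg)
lemma Lk_nonneg: "h \<le> n \<Longrightarrow> Lk k h n d \<ge> 0"
  by (subst LS[symmetric]) (auto intro!: sum_nonneg mult_nonneg_nonneg simp: chi_def ff_nat_nonneg)

lemma adm_basic:
  assumes "admissible c1 c2 n h d"
  shows "h \<le> n" "h < n" "1 \<le> h" "\<forall>i\<in>{1..n}. 1 \<le> d i" "Mk 1 n d \<ge> 2"
    "\<And>i j. 1 \<le> i \<Longrightarrow> i \<le> j \<Longrightarrow> j \<le> n \<Longrightarrow> d j \<le> d i"
    "real (d h) \<ge> c1 * sqrt (Mk 1 n d)" "real (d (h+1)) \<le> c2 * sqrt (Mk 1 n d)"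
proof -
  note a = assms[unfolded admissible_def]
  show hn: "h \<le> n" "h < n" "1 \<le> h" using a by auto
  show dp: "\<forall>i\<in>{1..n}. 1 \<le> d i" using a by auto
  show "\<And>i j. 1 \<le> i \<Longrightarrow> i \<le> j \<Longrightarrow> j \<le> n \<Longrightarrow> d j \<le> d i" using a by auto
  show "real (d h) \<ge> c1 * sqrt (Mk 1 n d)" "real (d (h+1)) \<le> c2 * sqrt (Mk 1 n d)" using a by auto
  have "real n = (\<Sum>i\<in>{1..n}. (1::real))" by simp
  also have "... \<le> (\<Sum>i\<in>{1..n}. real (d i))" using dp by (intro sum_mono) auto
  also have "... = Mk 1 n d" by (rule MS1)
  finally show "Mk 1 n d \<ge> 2" using hn by linarith
qed

lemma big_facts:
  fixes a b s :: real
  assumes hn: "h < n" and h1: "1 \<le> h" and dp: "\<forall>i\<in>{1..n}. 1 \<le> d i"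
    and mono: "\<And>i j. 1 \<le> i \<Longrightarrow> i \<le> j \<Longrightarrow> j \<le> n \<Longrightarrow> d j \<le> d i"
    and s: "s \<ge> 0" "s^2 = Mk 1 n d" and b: "b \<ge> 0"
    and dh: "real (d h) \<ge> a * s" and dh1: "real (d (h+1)) \<le> b * s" and as4: "a * s \<ge> 4"
  shows "Hk 1 h d \<ge> a * s" "Hk 2 h d \<ge> 3/4*a*s*Hk 1 h d" "Hk 3 h d \<ge> a/2*s*Hk 2 h d"
    "Lk 2 h n d \<le> b*s*Mk 1 n d" "Lk 3 h n d \<le> b*s*Lk 2 h n d" "Lk 4 h n d \<le> b^2*Mk 1 n d*Lk 2 h n d"
proof -
  have hle: "h \<le> n" using hn by simp
  have high: "real (d i) \<ge> a * s" if "i \<in> {1..h}" for i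
  proof -
    have "d h \<le> d i" using mono[of i h] that hn by auto
    thus ?thesis using dh by linarith
  qed
  have low: "real (d i) \<le> b * s" if "i \<in> {1..n}" "\<not> i \<le> h" for i
  proof -
    have "d i \<le> d (h+1)" using mono[of "h+1" i] that by auto
    thus ?thesis using dh1 by linarith
  qed
  have "Hk 1 h d \<ge> ff (real (d h)) 1" unfolding Hk_def
    by (rule member_le_sum) (use h1 ff_nat_nonneg in auto)
  thus "Hk 1 h d \<ge> a * s" using dh ff1[of "real (d h)"] by linarith
  have "Hk 2 h d \<ge> (\<Sum>i\<in>{1..h}. 3/4*a*s*ff (real (d i)) 1)" unfolding Hk_def
  proof (intro sum_mono)
    fix i assume i: "i \<in> {1..h}"
    have x: "real (d i) \<ge> a*s" "real (d i) \<ge> 4" using high[OF i] as4 by auto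
    have "real (d i) - 1 \<ge> 3/4*a*s" using x by linarith
    hence "3/4*a*s*real (d i) \<le> (real (d i) - 1) * real (d i)" using x by (intro mult_right_mono) auto
    thus "3/4*a*s*ff (real (d i)) 1 \<le> ff (real (d i)) 2" unfolding ff1 by (simp add: ff2 algebra_simps)
  qed
  thus "Hk 2 h d \<ge> 3/4*a*s*Hk 1 h d" unfolding Hk_def[of 1] by (simp add: sum_distrib_left)
  have "Hk 3 h d \<ge> (\<Sum>i\<in>{1..h}. a/2*s*ff (real (d i)) 2)" unfolding Hk_def
  proof (intro sum_mono)
    fix i assume i: "i \<in> {1..h}"
    have x: "real (d i) \<ge> a*s" "real (d i) \<ge> 4" using high[OF i] as4 by auto
    have "real (d i) - 2 \<ge> a/2*s" using x by linarith
    moreover have "ff (real (d i)) 2 \<ge> 0" by (rule ff_nat_nonneg)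
    ultimately have "a/2*s*ff (real (d i)) 2 \<le> (real (d i) - 2) * ff (real (d i)) 2" by (intro mult_right_mono) auto
    thus "a/2*s*ff (real (d i)) 2 \<le> ff (real (d i)) 3" by (simp add: ff2 ff3 algebra_simps)
  qed
  thus "Hk 3 h d \<ge> a/2*s*Hk 2 h d" unfolding Hk_def[of 2] by (simp add: sum_distrib_left)
  have "Lk 2 h n d \<le> (\<Sum>i\<in>{1..n}. b*s*real (d i))" unfolding LS[OF hle, symmetric]
  proof (intro sum_mono)
    fix i assume i: "i \<in> {1..n}"
    show "(1 - chi h i) * ff (real (d i)) 2 \<le> b*s*real (d i)"
    proof (cases "i \<le> h")
      case True thus ?thesis using b s by (simp add: chi_def)
    next
      case False
      have x: "real (d i) \<le> b*s" "real (d i) \<ge> 1" using low[OF i False] dp i by auto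
      have "(real (d i) - 1) * real (d i) \<le> (b*s) * real (d i)" using x by (intro mult_right_mono) auto
      thus ?thesis using False by (simp add: chi_def ff2 algebra_simps)
    qed
  qed
  thus "Lk 2 h n d \<le> b*s*Mk 1 n d" by (simp only: sum_distrib_left[symmetric] MS1)
  have "Lk 3 h n d \<le> (\<Sum>i\<in>{1..n}. b*s*((1 - chi h i) * ff (real (d i)) 2))" unfolding LS[OF hle, symmetric]
  proof (intro sum_mono)
    fix i assume i: "i \<in> {1..n}"
    show "(1 - chi h i) * ff (real (d i)) 3 \<le> b*s*((1 - chi h i) * ff (real (d i)) 2)"
    proof (cases "i \<le> h")
      case True thus ?thesis by (simp add: chi_def)
    next
      case False
      have x: "real (d i) \<le> b*s" using low[OF i False] by auto
      have "(real (d i) - 2) * ff (real (d i)) 2 \<le> (b*s) * ff (real (d i)) 2"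
        using x ff_nat_nonneg[of "d i" 2] by (intro mult_right_mono) auto
      thus ?thesis using False by (simp add: chi_def ff2 ff3 algebra_simps)
    qed
  qed
  thus "Lk 3 h n d \<le> b*s*Lk 2 h n d" unfolding LS[OF hle, symmetric] by (simp add: sum_distrib_left)
  have "Lk 4 h n d \<le> (\<Sum>i\<in>{1..n}. b^2*Mk 1 n d*((1 - chi h i) * ff (real (d i)) 2))" unfolding LS[OF hle, symmetric]
  proof (intro sum_mono)
    fix i assume i: "i \<in> {1..n}"
    show "(1 - chi h i) * ff (real (d i)) 4 \<le> b^2*Mk 1 n d*((1 - chi h i) * ff (real (d i)) 2)"
    proof (cases "i \<le> h")
      case True thus ?thesis by (simp add: chi_def)
    next
      case False
      have x: "real (d i) \<le> b*s" "real (d i) \<ge> 1" using low[OF i False] dp i by auto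
      have c: "ff (real (d i) - 2) 2 \<le> b^2 * Mk 1 n d * (if d i = 1 then 2 else 1)"
      proof (cases "d i = 1")
        case True
        have "b^2 * Mk 1 n d \<ge> 1"
        proof -
          have "1 \<le> b*s" using x by linarith
          hence "1*1 \<le> (b*s)*(b*s)" by (intro mult_mono) auto
          thus ?thesis using s by (simp add: power2_eq_square algebra_simps)
        qed
        thus ?thesis using True by (simp add: ff2)
      next
        case False
        hence x2: "real (d i) \<ge> 2" using x by simp
        have "ff (real (d i) - 2) 2 = (real (d i) - 2) * (real (d i) - 3)" by (simp add: ff2 algebra_simps)
        also have "... \<le> real (d i) * real (d i)"
        proof (cases "real (d i) \<ge> 3")
          case True thus ?thesis using x2 by (intro mult_mono) auto
        next
          case False
          hence "(real (d i) - 2) * (real (d i) - 3) \<le> 0" using x2 by (intro mult_nonneg_nonpos) auto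
          moreover have "real (d i) * real (d i) \<ge> 0" by simp
          ultimately show ?thesis by linarith
        qed
        also have "... \<le> (b*s)*(b*s)" using x by (intro mult_mono) auto
        also have "... = b^2 * Mk 1 n d" using s by (simp add: power2_eq_square algebra_simps)
        finally show ?thesis using False by simp
      qed
      have "ff (real (d i)) 4 \<le> b^2 * Mk 1 n d * ff (real (d i)) 2"
      proof (cases "d i = 1")
        case True thus ?thesis by (simp add: ff2 ff4)
      next
        case False
        have "ff (real (d i)) 4 = ff (real (d i) - 2) 2 * ff (real (d i)) 2" using a_c_eq_q[of "d i"] by (simp add: mult.commute)
        also have "... \<le> b^2 * Mk 1 n d * ff (real (d i)) 2"
          using c False ff_nat_nonneg[of "d i" 2] by (intro mult_right_mono) auto
        finally show ?thesis .
      qed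
      thus ?thesis using False by (simp add: chi_def)
    qed
  qed
  thus "Lk 4 h n d \<le> b^2*Mk 1 n d*Lk 2 h n d" unfolding LS[OF hle, symmetric] by (simp add: sum_distrib_left)
qed

lemma xi_zero:
  assumes d1: "\<forall>i\<in>{1..n}. d i = 1" and M: "Mk 1 n d > 0"
  shows "xi n d = 0"
proof -
  have ff21: "ff (1::real) 2 = 0" "ff (1::real) 3 = 0" by (simp_all add: ff2 ff3)
  have M2: "Mk 2 n d = 0" "Mk 3 n d = 0" unfolding Mk_def by (auto intro!: sum.neutral simp: d1 ff21)
  have "U1 n d = 0" unfolding U1_def Let_def by (auto intro!: sum.neutral simp: d1 ff2)
  moreover have "U2 n d = 0" unfolding U2_def Let_def using M by (auto intro!: sum.neutral simp: d1 ff2)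
  moreover have "U3 n d = 0" unfolding U3_def Let_def using M by (auto intro!: sum.neutral simp: d1 ff2)
  moreover have "U4 n d = 0" unfolding U4_def Let_def using M by (auto intro!: sum.neutral simp: d1 ff2 ff3)
  moreover have "U5 n d = 0" unfolding U5_def Let_def using M by (auto intro!: sum.neutral simp: d1 ff2)
  ultimately show ?thesis unfolding xi_def Let_def M2 by simp
qed

lemma core:
  fixes c1 c2 :: real
  assumes c1: "c1 > 0"
  shows "\<exists>C\<ge>0. \<forall>n h d. admissible c1 c2 n h d \<longrightarrow>
            xi n d \<le> C * ((Hk 1 h d * (Hk 2 h d)^2 + Mk 2 n d * Mk 3 n d) / (Mk 1 n d)^3
              + Lk 2 h n d * Mk 2 n d * Mk 3 n d / (Mk 1 n d)^4
              + Lk 2 h n d * Lk 3 h n d * Hk 4 h d / (Mk 1 n d)^5)"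
proof -
  define b where "b = max c2 1"
  define N where "N = 16/c1^2"
  define C where "C = max (Kbig c1 b) (Ksmall N)"
  have bp: "b > 0" "c2 \<le> b" unfolding b_def by auto
  have Kb0: "Kbig c1 b \<ge> 0" unfolding Kbig_def using c1 bp by (intro add_nonneg_nonneg) auto
  have Ks0: "Ksmall N \<ge> 0" unfolding Ksmall_def by simp
  have C0: "C \<ge> 0" unfolding C_def using Kb0 by simp
  show ?thesis
  proof (intro exI[of _ C] conjI allI impI C0)
    fix n h d assume adm: "admissible c1 c2 n h d"
    note A = adm_basic[OF adm]
    have hle: "h \<le> n" using A(1) .
    define m where "m = Mk 1 n d"
    define s where "s = sqrt m"
    have m2: "m \<ge> 2" using A(5) unfolding m_def .
    have mp: "m > 0" using m2 by simp
    have s: "s > 0" "s^2 = m" unfolding s_def using mp by auto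
    define R where "R = (Hk 1 h d * (Hk 2 h d)^2 + Mk 2 n d * Mk 3 n d) / (Mk 1 n d)^3
              + Lk 2 h n d * Mk 2 n d * Mk 3 n d / (Mk 1 n d)^4
              + Lk 2 h n d * Lk 3 h n d * Hk 4 h d / (Mk 1 n d)^5"
    have nn: "Hk k h d \<ge> 0" "Lk k h n d \<ge> 0" "Mk k n d \<ge> 0" for k
      using Hk_nonneg Lk_nonneg[OF hle] M2_nonneg by auto
    have R1R: "Hk 1 h d * (Hk 2 h d)^2 / m^3 \<le> R"
    proof -
      have "Mk 2 n d * Mk 3 n d / (Mk 1 n d)^3 \<ge> 0" "Lk 2 h n d * Mk 2 n d * Mk 3 n d / (Mk 1 n d)^4 \<ge> 0"
        "Lk 2 h n d * Lk 3 h n d * Hk 4 h d / (Mk 1 n d)^5 \<ge> 0" using nn by auto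
      thus ?thesis unfolding R_def m_def add_divide_distrib by linarith
    qed
    have R0: "R \<ge> 0" using R1R nn mp by (smt (verit) divide_nonneg_pos mult_nonneg_nonneg zero_le_power zero_less_power)
    have xiE: "xi n d \<le> Ebound m (Hk 1 h d) (Hk 2 h d) (Hk 3 h d) (Hk 4 h d) (Lk 2 h n d) (Lk 3 h n d) (Lk 4 h n d)"
      unfolding m_def by (rule xi_le_E[OF hle A(4)]) (use mp in \<open>simp add: m_def\<close>)
    show "xi n d \<le> C * R"
    proof (cases "d 1 = 1")
      case True
      have "\<forall>i\<in>{1..n}. d i = 1"
      proof
        fix i assume i: "i \<in> {1..n}"
        have "d i \<le> d 1" using A(6)[of 1 i] i by auto
        thus "d i = 1" using True A(4) i by force
      qed
      hence "xi n d = 0" using mp unfolding m_def by (intro xi_zero) auto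
      thus ?thesis using C0 R0 by simp
    next
      case False
      have n1: "1 \<in> {1..n}" "1 \<in> {1..h}" using A(2,3) by auto
      have d12: "d 1 \<ge> 2" using False A(4) n1 by force
      have HL': "Hk k h d + Lk k h n d = Mk k n d" for k by (rule HL)
      have h1m: "Hk 1 h d \<le> m" using HL'[of 1] nn(2)[of 1] unfolding m_def by linarith
      show ?thesis
      proof (cases "c1 * s \<ge> 4")
        case True
        have dh1: "real (d (h+1)) \<le> b * s" using A(8)[folded m_def s_def] bp s
          by (smt (verit) mult_right_mono)
        have dh: "c1 * s \<le> real (d h)" using A(7)[folded m_def s_def] .
        note BF = big_facts[where a=c1 and b=b and s=s, OF A(2) A(3) A(4) _ _ _ _ dh dh1 True]
        have F': "Hk 1 h d \<ge> c1 * s" "Hk 2 h d \<ge> 3/4*c1*s*Hk 1 h d" "Hk 3 h d \<ge> c1/2*s*Hk 2 h d"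
          "Lk 2 h n d \<le> b*s*m" "Lk 3 h n d \<le> b*s*Lk 2 h n d" "Lk 4 h n d \<le> b^2*m*Lk 2 h n d"
          using BF A(6) s bp unfolding m_def by auto
        have CS: "(Hk 2 h d + Lk 2 h n d)^2 \<le> m*((Hk 3 h d + Lk 3 h n d) + (Hk 2 h d + Lk 2 h n d))"
          unfolding HL' m_def by (rule CS_M)
        have "Ebound m (Hk 1 h d) (Hk 2 h d) (Hk 3 h d) (Hk 4 h d) (Lk 2 h n d) (Lk 3 h n d) (Lk 4 h n d)
           \<le> Kbig c1 b * ((Hk 1 h d*(Hk 2 h d)^2 + (Hk 2 h d + Lk 2 h n d)*(Hk 3 h d + Lk 3 h n d))/m^3
            + Lk 2 h n d*(Hk 2 h d + Lk 2 h n d)*(Hk 3 h d + Lk 3 h n d)/m^4 + Lk 2 h n d*Lk 3 h n d*Hk 4 h d/m^5)"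
          by (rule big_case[OF mp s c1 bp(1) True F'(1) h1m F'(2) F'(3) nn(1) nn(2) F'(4) nn(2) F'(5) nn(2) F'(6) CS])
        also have "... = Kbig c1 b * R" unfolding R_def HL' m_def ..
        also have "... \<le> C * R" unfolding C_def using R0 by (intro mult_right_mono) auto
        finally show ?thesis using xiE by linarith
      next
        case False
        have mN: "m \<le> N"
        proof -
          have "c1 * s \<le> 4" using False by simp
          hence "(c1*s)^2 \<le> 4^2" using c1 s by (intro power_mono) auto
          hence "c1^2 * m \<le> 16" using s by (simp add: power_mult_distrib)
          thus ?thesis unfolding N_def using c1 by (simp add: field_simps)
        qed
        have h1: "Hk 1 h d \<ge> 1"
        proof -
          have "Hk 1 h d \<ge> ff (real (d 1)) 1" unfolding Hk_def
            by (rule member_le_sum) (use n1 ff_nat_nonneg in auto)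
          thus ?thesis using d12 ff1[of "real (d 1)"] by linarith
        qed
        have h2: "Hk 2 h d \<ge> 2"
        proof -
          have "Hk 2 h d \<ge> ff (real (d 1)) 2" unfolding Hk_def
            by (rule member_le_sum) (use n1 ff_nat_nonneg in auto)
          moreover have "ff (real (d 1)) 2 \<ge> 2"
          proof -
            have "real (d 1) \<ge> 2" using d12 by simp
            hence "2*1 \<le> real (d 1) * (real (d 1) - 1)" by (intro mult_mono) auto
            thus ?thesis by (simp add: ff2)
          qed
          ultimately show ?thesis by linarith
        qed
        have up: "Hk k h d \<le> m^k" "Lk k h n d \<le> m^k" if "1 \<le> k" for k
          using Mk_le_pow[OF that, of n d] HL'[of k] nn[of k] unfolding m_def by linarith+
        have "Ebound m (Hk 1 h d) (Hk 2 h d) (Hk 3 h d) (Hk 4 h d) (Lk 2 h n d) (Lk 3 h n d) (Lk 4 h n d)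
           \<le> Ksmall N * (Hk 1 h d * (Hk 2 h d)^2 / m^3)"
          by (rule small_case) (use m2 mN h1 h1m h2 up[of 2] up[of 3] up[of 4] nn in auto)
        also have "... \<le> Ksmall N * R" using R1R Ks0 by (intro mult_left_mono) auto
        also have "... \<le> C * R" unfolding C_def using R0 by (intro mult_right_mono) auto
        finally show ?thesis using xiE by linarith
      qed
    qed
  qed
qed

theorem lemma4p4:
  shows "(\<forall>c1 c2. c1 > 0 \<longrightarrow> (\<exists>C. \<forall>n h d. admissible c1 c2 n h d \<longrightarrow>
            xi n d \<le> C * ((Hk 1 h d * (Hk 2 h d)^2 + Mk 2 n d * Mk 3 n d) / (Mk 1 n d)^3
              + Lk 2 h n d * Mk 2 n d * Mk 3 n d / (Mk 1 n d)^4
              + Lk 2 h n d * Lk 3 h n d * Hk 4 h d / (Mk 1 n d)^5)))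
       \<and> (\<forall>c1 c2 c3. c1 > 0 \<longrightarrow> c3 > 0 \<longrightarrow> (\<exists>C. \<forall>n h d. admissible c1 c2 n h d
            \<longrightarrow> Lk 2 h n d \<ge> c3 * Mk 1 n d \<longrightarrow>
            xi n d \<le> C * (Hk 1 h d * (Hk 2 h d)^2 / (Mk 1 n d)^3
              + Lk 2 h n d * Mk 2 n d * Mk 3 n d / (Mk 1 n d)^4
              + Lk 2 h n d * Lk 3 h n d * Hk 4 h d / (Mk 1 n d)^5)))"
proof (intro conjI allI impI)
  fix c1 c2 :: real assume c1: "c1 > 0"
  from core[OF c1, of c2] obtain C where "C \<ge> 0" and
    "\<forall>n h d. admissible c1 c2 n h d \<longrightarrow>
            xi n d \<le> C * ((Hk 1 h d * (Hk 2 h d)^2 + Mk 2 n d * Mk 3 n d) / (Mk 1 n d)^3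
              + Lk 2 h n d * Mk 2 n d * Mk 3 n d / (Mk 1 n d)^4
              + Lk 2 h n d * Lk 3 h n d * Hk 4 h d / (Mk 1 n d)^5)" by blast
  thus "\<exists>C. \<forall>n h d. admissible c1 c2 n h d \<longrightarrow>
            xi n d \<le> C * ((Hk 1 h d * (Hk 2 h d)^2 + Mk 2 n d * Mk 3 n d) / (Mk 1 n d)^3
              + Lk 2 h n d * Mk 2 n d * Mk 3 n d / (Mk 1 n d)^4
              + Lk 2 h n d * Lk 3 h n d * Hk 4 h d / (Mk 1 n d)^5)" by blast
next
  fix c1 c2 c3 :: real assume c1: "c1 > 0" and c3: "c3 > 0"
  from core[OF c1, of c2] obtain C where C0: "C \<ge> 0" and CC:
    "\<forall>n h d. admissible c1 c2 n h d \<longrightarrow>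
            xi n d \<le> C * ((Hk 1 h d * (Hk 2 h d)^2 + Mk 2 n d * Mk 3 n d) / (Mk 1 n d)^3
              + Lk 2 h n d * Mk 2 n d * Mk 3 n d / (Mk 1 n d)^4
              + Lk 2 h n d * Lk 3 h n d * Hk 4 h d / (Mk 1 n d)^5)" by blast
  show "\<exists>C. \<forall>n h d. admissible c1 c2 n h d
            \<longrightarrow> Lk 2 h n d \<ge> c3 * Mk 1 n d \<longrightarrow>
            xi n d \<le> C * (Hk 1 h d * (Hk 2 h d)^2 / (Mk 1 n d)^3
              + Lk 2 h n d * Mk 2 n d * Mk 3 n d / (Mk 1 n d)^4
              + Lk 2 h n d * Lk 3 h n d * Hk 4 h d / (Mk 1 n d)^5)"
  proof (intro exI[of _ "C * (1 + 1/c3)"] allI impI)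
    fix n h d assume adm: "admissible c1 c2 n h d" and L: "Lk 2 h n d \<ge> c3 * Mk 1 n d"
    note A = adm_basic[OF adm]
    define m where "m = Mk 1 n d"
    have mp: "m > 0" using A(5) unfolding m_def by simp
    define R1 where "R1 = Hk 1 h d * (Hk 2 h d)^2 / m^3"
    define R2 where "R2 = Mk 2 n d * Mk 3 n d / m^3"
    define R3 where "R3 = Lk 2 h n d * Mk 2 n d * Mk 3 n d / m^4"
    define R4 where "R4 = Lk 2 h n d * Lk 3 h n d * Hk 4 h d / m^5"
    have nn: "Hk k h d \<ge> 0" "Lk k h n d \<ge> 0" "Mk k n d \<ge> 0" for k
      using Hk_nonneg Lk_nonneg[OF A(1)] M2_nonneg by auto
    have Rp: "R1 \<ge> 0" "R3 \<ge> 0" "R4 \<ge> 0" unfolding R1_def R3_def R4_def using nn mp by auto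
    have R23: "c3 * R2 \<le> R3"
    proof -
      have "c3 * R2 = (c3 * m) * Mk 2 n d * Mk 3 n d / m^4" unfolding R2_def using mp
        by (simp add: field_simps eval_nat_numeral)
      also have "... \<le> Lk 2 h n d * Mk 2 n d * Mk 3 n d / m^4"
        using L nn mp unfolding m_def by (intro divide_right_mono mult_right_mono) auto
      finally show ?thesis unfolding R3_def .
    qed
    have R2b: "R2 \<le> R3 / c3" using R23 c3 by (simp add: field_simps)
    have "xi n d \<le> C * (R1 + R2 + R3 + R4)" using CC adm unfolding R1_def R2_def R3_def R4_def m_def
      by (simp add: add_divide_distrib)
    also have "... \<le> C * ((1 + 1/c3) * (R1 + R3 + R4))"
    proof (intro mult_left_mono C0)
      have "R3 / c3 \<le> (1/c3) * (R1 + R3 + R4)" using Rp c3 by (simp add: field_simps)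
      thus "R1 + R2 + R3 + R4 \<le> (1 + 1/c3) * (R1 + R3 + R4)" using R2b by (simp add: algebra_simps)
    qed
    finally show "xi n d \<le> C * (1 + 1/c3) * (Hk 1 h d * (Hk 2 h d)^2 / (Mk 1 n d)^3
              + Lk 2 h n d * Mk 2 n d * Mk 3 n d / (Mk 1 n d)^4
              + Lk 2 h n d * Lk 3 h n d * Hk 4 h d / (Mk 1 n d)^5)"
      unfolding R1_def R3_def R4_def m_def by (simp add: mult.assoc)
  qed
qed

end
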